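(* Let $U\neq0$, $3\le k<\lfloor L/2\rfloor$, and let $F_k$ be a $k$-local conserved quantity of the one-dimensional Hubbard model. For a $k$-support basis element $q=(e_{i,\uparrow}\cdots e_{i+k-1,\uparrow})(e_{i,\downarrow}\cdots e_{i+k-1,\downarrow})$ starting at site $i$, let $c_i(q)$ be its coefficient in $F_k$. If $(e_{i+1,\uparrow},e_{i+1,\downarrow})\neq(I,I)$, then $c_i(q)=0$.
   Context: Fermionic operators $c_{j,\sigma},c^\dagger_{j,\sigma}$, $j\in\{1,\dots,L\}$ with indices modulo $L$ (periodic boundary conditions), $\sigma\in\{\uparrow,\downarrow\}$, with canonical anticommutation relations; $n_{j,\sigma}=c^\dagger_{j,\sigma}c_{j,\sigma}$, $z_{j,\sigma}=2n_{j,\sigma}-1$. Hubbard Hamiltonian: $H=-2\sum_j\sum_\sigma(c^\dagger_{j,\sigma}c_{j+1,\sigma}+c^\dagger_{j+1,\sigma}c_{j,\sigma})+4U\sum_j(n_{j,\uparrow}-\tfrac12)(n_{j,\downarrow}-\tfrac12)$. An $l$-support basis element starting at site $i$ is $(e_{i,\uparrow}\cdots e_{i+l-1,\uparrow})(e_{i,\downarrow}\cdots e_{i+l-1,\downarrow})$ with $e_{j,\sigma}\in\{c_{j,\sigma},c^\dagger_{j,\sigma},z_{j,\sigma},I\}$, $(e_{i,\uparrow},e_{i,\downarrow})\neq(I,I)$, $(e_{i+l-1,\uparrow},e_{i+l-1,\downarrow})\neq(I,I)$. A $k$-local conserved quantity is $F_k=\sum_{l=1}^k\sum_{i=1}^L\sum_e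 c_e\,e$ (inner sum over $l$-support basis elements starting at $i$) with $[F_k,H]=0$ and some nonzero coefficient on a $k$-support basis element; $c_i(q)$ denotes the coefficient of $q$ in this expansion. *)

theory Defs
  imports Complex_Main
begin

text \<open>Fock space of 2L fermionic modes. Fock basis vectors are the subsets
  of {0..<2L} (occupied modes). An operator is represented by its matrix
  A T S = <T| A |S>. Fermionic operators via the Jordan-Wigner construction.\<close>

datatype spin = Up | Dn

datatype loc = Cm | Cd | Zm | Im

type_synonym op = "nat set \<Rightarrow> nat set \<Rightarrow> complex"

definition modes :: "nat \<Rightarrow> nat set" where
  "modes L = {0..<2*L}"

definition mode :: "nat \<Rightarrow> nat \<Rightarrow> spin \<Rightarrow> nat" where
  "mode L j s = 2 * (j mod L) + (case s of Up \<Rightarrow> 0 | Dn \<Rightarrow> 1)"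

definition jw_sign :: "nat \<Rightarrow> nat set \<Rightarrow> complex" where
  "jw_sign m S = (-1) ^ card {m' \<in> S. m' < m}"

definition ann :: "nat \<Rightarrow> op" where
  "ann m = (\<lambda>T S. if m \<in> S \<and> T = S - {m} then jw_sign m S else 0)"

definition cre :: "nat \<Rightarrow> op" where
  "cre m = (\<lambda>T S. if m \<notin> S \<and> T = insert m S then jw_sign m S else 0)"

definition idop :: op where
  "idop = (\<lambda>T S. if T = S then 1 else 0)"

definition opmul :: "nat \<Rightarrow> op \<Rightarrow> op \<Rightarrow> op" where
  "opmul L A B = (\<lambda>T S. \<Sum>R\<in>Pow (modes L). A T R * B R S)"

definition cop :: "nat \<Rightarrow> nat \<Rightarrow> spin \<Rightarrow> op" where
  "cop L j s = ann (mode L j s)"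

definition cdag :: "nat \<Rightarrow> nat \<Rightarrow> spin \<Rightarrow> op" where
  "cdag L j s = cre (mode L j s)"

definition nop :: "nat \<Rightarrow> nat \<Rightarrow> spin \<Rightarrow> op" where
  "nop L j s = opmul L (cdag L j s) (cop L j s)"

definition zop :: "nat \<Rightarrow> nat \<Rightarrow> spin \<Rightarrow> op" where
  "zop L j s = (\<lambda>T S. 2 * nop L j s T S - idop T S)"

definition hubbard :: "nat \<Rightarrow> real \<Rightarrow> op" where
  "hubbard L U = (\<lambda>T S.
     -2 * (\<Sum>j<L. \<Sum>s\<in>{Up, Dn}.
             opmul L (cdag L j s) (cop L (j+1) s) T S + opmul L (cdag L (j+1) s) (cop L j s) T S)
     + 4 * complex_of_real U * (\<Sum>j<L.
             opmul L (\<lambda>T' S'. nop L j Up T' S' - idop T' S' / 2)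
                     (\<lambda>T' S'. nop L j Dn T' S' - idop T' S' / 2) T S))"

definition loc_op :: "nat \<Rightarrow> loc \<Rightarrow> nat \<Rightarrow> spin \<Rightarrow> op" where
  "loc_op L e j s = (case e of Cm \<Rightarrow> cop L j s | Cd \<Rightarrow> cdag L j s | Zm \<Rightarrow> zop L j s | Im \<Rightarrow> idop)"

fun chain :: "nat \<Rightarrow> nat \<Rightarrow> spin \<Rightarrow> loc list \<Rightarrow> op" where
  "chain L i s [] = idop"
| "chain L i s (e # es) = opmul L (loc_op L e i s) (chain L (Suc i) s es)"

definition basis_elem :: "nat \<Rightarrow> nat \<Rightarrow> (loc \<times> loc) list \<Rightarrow> op" where
  "basis_elem L i es = opmul L (chain L i Up (map fst es)) (chain L i Dn (map snd es))"

definition all_locs :: "(loc \<times> loc) set" where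
  "all_locs = {Cm, Cd, Zm, Im} \<times> {Cm, Cd, Zm, Im}"

definition supp_elems :: "nat \<Rightarrow> (loc \<times> loc) list set" where
  "supp_elems l = {es. set es \<subseteq> all_locs \<and> length es = l \<and> 1 \<le> l
                       \<and> hd es \<noteq> (Im, Im) \<and> last es \<noteq> (Im, Im)}"

definition local_sum :: "nat \<Rightarrow> nat \<Rightarrow> (nat \<Rightarrow> (loc \<times> loc) list \<Rightarrow> complex) \<Rightarrow> op" where
  "local_sum L k c = (\<lambda>T S. \<Sum>l\<in>{1..k}. \<Sum>i<L. \<Sum>es\<in>supp_elems l. c i es * basis_elem L i es T S)"

definition commutes :: "nat \<Rightarrow> op \<Rightarrow> op \<Rightarrow> bool" where
  "commutes L A B \<longleftrightarrow> (\<forall>T\<in>Pow (modes L). \<forall>S\<in>Pow (modes L). opmul L A B T S = opmul L B A T S)"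

definition k_local_conserved :: "nat \<Rightarrow> real \<Rightarrow> nat \<Rightarrow> (nat \<Rightarrow> (loc \<times> loc) list \<Rightarrow> complex) \<Rightarrow> bool" where
  "k_local_conserved L U k c \<longleftrightarrow>
     commutes L (local_sum L k c) (hubbard L U) \<and>
     (\<exists>i<L. \<exists>es\<in>supp_elems k. c i es \<noteq> 0)"

end

theory Submission
  imports Defs
begin

type_synonym wd = "(nat \<times> loc) list"

fun isodd :: "loc \<Rightarrow> bool" where
  "isodd Cm = True" | "isodd Cd = True" | "isodd Zm = False" | "isodd Im = False"

fun estep :: "loc \<Rightarrow> nat \<Rightarrow> nat set \<Rightarrow> nat set" where
  "estep Cm m S = S - {m}"
| "estep Cd m S = insert m S"
| "estep Zm m S = S"
| "estep Im m S = S"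

fun ewt :: "loc \<Rightarrow> nat \<Rightarrow> nat set \<Rightarrow> complex" where
  "ewt Cm m S = (if m \<in> S then jw_sign m S else 0)"
| "ewt Cd m S = (if m \<notin> S then jw_sign m S else 0)"
| "ewt Zm m S = (if m \<in> S then 1 else -1)"
| "ewt Im m S = 1"

fun wst :: "wd \<Rightarrow> nat set \<Rightarrow> nat set" where
  "wst [] S = S"
| "wst (p # W) S = estep (snd p) (fst p) (wst W S)"

fun ww :: "wd \<Rightarrow> nat set \<Rightarrow> complex" where
  "ww [] S = 1"
| "ww (p # W) S = ewt (snd p) (fst p) (wst W S) * ww W S"

definition wop :: "wd \<Rightarrow> op" where
  "wop W = (\<lambda>T S. if T = wst W S then ww W S else 0)"

definition inrange :: "nat \<Rightarrow> wd \<Rightarrow> bool" where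
  "inrange L W \<longleftrightarrow> (\<forall>p\<in>set W. fst p < 2 * L)"

definition eqv :: "nat \<Rightarrow> op \<Rightarrow> op \<Rightarrow> bool" where
  "eqv L A B \<longleftrightarrow> (\<forall>T\<in>Pow (modes L). \<forall>S\<in>Pow (modes L). A T S = B T S)"

definition ip :: "nat \<Rightarrow> op \<Rightarrow> op \<Rightarrow> complex" where
  "ip L A B = (\<Sum>T\<in>Pow (modes L). \<Sum>S\<in>Pow (modes L). A T S * B T S)"

lemma wst_append[simp]: "wst (A @ B) S = wst A (wst B S)"
  by (induction A) auto

lemma ww_append[simp]: "ww (A @ B) S = ww A (wst B S) * ww B S"
  by (induction A) auto

lemma estep_pow: "S \<subseteq> modes L \<Longrightarrow> m < 2 * L \<Longrightarrow> estep e m S \<subseteq> modes L"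
  by (cases e) (auto simp: modes_def)

lemma wst_pow: "inrange L W \<Longrightarrow> S \<subseteq> modes L \<Longrightarrow> wst W S \<subseteq> modes L"
proof (induction W)
  case (Cons p W)
  then show ?case using estep_pow[of "wst W S" L "fst p" "snd p"] by (auto simp: inrange_def)
qed simp

lemma inrange_append[simp]: "inrange L (A @ B) \<longleftrightarrow> inrange L A \<and> inrange L B"
  by (auto simp: inrange_def)

lemma inrange_Cons[simp]: "inrange L (p # B) \<longleftrightarrow> fst p < 2 * L \<and> inrange L B"
  by (auto simp: inrange_def)

lemma inrange_Nil[simp]: "inrange L []"
  by (auto simp: inrange_def)

lemma finite_modes[simp]: "finite (modes L)"
  by (simp add: modes_def)

lemma jw_sq: "jw_sign m S * jw_sign m S = 1"
  by (simp add: jw_sign_def flip: power_add)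

lemma jw_insert_self[simp]: "jw_sign m (insert m S) = jw_sign m S"
  unfolding jw_sign_def by (rule arg_cong[where f="\<lambda>x. (-1)^card x"]) auto

lemma jw_remove_self[simp]: "jw_sign m (S - {m}) = jw_sign m S"
  unfolding jw_sign_def by (rule arg_cong[where f="\<lambda>x. (-1)^card x"]) auto

lemma jw_nz[simp]: "jw_sign m S \<noteq> 0"
  by (simp add: jw_sign_def)

lemma opmul_wop:
  assumes "inrange L B" "T \<in> Pow (modes L)" "S \<in> Pow (modes L)"
  shows "opmul L (wop A) (wop B) T S = wop (A @ B) T S"
proof -
  have R: "wst B S \<in> Pow (modes L)" using wst_pow[OF assms(1)] assms(3) by auto
  have "opmul L (wop A) (wop B) T S = (\<Sum>R\<in>Pow (modes L). wop A T R * wop B R S)"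
    by (simp add: opmul_def)
  also have "\<dots> = wop A T (wst B S) * wop B (wst B S) S"
  proof -
    have "\<And>R. wop A T R * wop B R S = (if wst B S = R then wop A T R * ww B S else 0)"
      by (auto simp: wop_def)
    then show ?thesis using R by (simp add: wop_def)
  qed
  also have "\<dots> = wop (A @ B) T S" by (simp add: wop_def)
  finally show ?thesis .
qed


lemma mode_lt: "0 < L \<Longrightarrow> mode L j s < 2 * L"
proof -
  assume "0 < L"
  then have "j mod L < L" by simp
  then show ?thesis by (cases s) (auto simp: mode_def)
qed

lemma eqvD: "eqv L A B \<Longrightarrow> T \<in> Pow (modes L) \<Longrightarrow> S \<in> Pow (modes L) \<Longrightarrow> A T S = B T S"
  by (simp add: eqv_def)

lemma opmul_cong:
  assumes "eqv L A A'" "eqv L B B'" "T \<in> Pow (modes L)" "S \<in> Pow (modes L)"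
  shows "opmul L A B T S = opmul L A' B' T S"
  unfolding opmul_def using assms by (auto intro!: sum.cong simp: eqv_def)

lemma opmul_wop_eqv:
  assumes "eqv L A (wop W1)" "eqv L B (wop W2)" "inrange L W2"
  shows "eqv L (opmul L A B) (wop (W1 @ W2))"
  unfolding eqv_def using opmul_cong[OF assms(1,2)] opmul_wop[OF assms(3)] by auto

lemma idop_wop: "idop = wop []"
  by (auto simp: idop_def wop_def fun_eq_iff)

lemma ann_wop: "ann m = wop [(m, Cm)]"
  by (auto simp: ann_def wop_def fun_eq_iff)

lemma cre_wop: "cre m = wop [(m, Cd)]"
  by (auto simp: cre_def wop_def fun_eq_iff)

lemma nop_val:
  assumes "m < 2 * L" "S \<in> Pow (modes L)"
  shows "opmul L (cre m) (ann m) T S = (if T = S \<and> m \<in> S then 1 else 0)"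
proof -
  have "\<And>R. cre m T R * ann m R S = (if S - {m} = R then cre m T R * (if m \<in> S then jw_sign m S else 0) else 0)"
    by (auto simp: ann_def)
  then have "opmul L (cre m) (ann m) T S = cre m T (S - {m}) * (if m \<in> S then jw_sign m S else 0)"
    using assms by (auto simp: opmul_def)
  then show ?thesis by (auto simp: cre_def jw_sq insert_absorb)
qed

lemma zop_wop:
  assumes "0 < L" "S \<in> Pow (modes L)"
  shows "zop L j s T S = wop [(mode L j s, Zm)] T S"
  using nop_val[OF mode_lt[OF assms(1)] assms(2)]
  by (auto simp: zop_def nop_def cdag_def cop_def idop_def wop_def)

lemma loc_op_wop:
  assumes "0 < L" "S \<in> Pow (modes L)"
  shows "loc_op L e j s T S = wop [(mode L j s, e)] T S"
  using zop_wop[OF assms]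
  by (cases e) (auto simp: loc_op_def cop_def cdag_def ann_wop cre_wop idop_def wop_def)

definition cword :: "nat \<Rightarrow> nat \<Rightarrow> spin \<Rightarrow> loc list \<Rightarrow> wd" where
  "cword L i s es = map (\<lambda>t. (mode L (i + t) s, es ! t)) [0..<length es]"

lemma cword_Nil[simp]: "cword L i s [] = []"
  by (simp add: cword_def)

lemma cword_Cons: "cword L i s (e # es) = (mode L i s, e) # cword L (Suc i) s es"
  unfolding cword_def by (simp add: map_upt_Suc del: upt_Suc)

lemma inrange_cword: "0 < L \<Longrightarrow> inrange L (cword L i s es)"
  by (auto simp: inrange_def cword_def mode_lt)

lemma chain_wop: "0 < L \<Longrightarrow> eqv L (chain L i s es) (wop (cword L i s es))"
proof (induction es arbitrary: i)
  case Nil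
  then show ?case by (simp add: eqv_def idop_wop)
next
  case (Cons e es)
  have "eqv L (loc_op L e i s) (wop [(mode L i s, e)])"
    using loc_op_wop[OF Cons.prems] by (simp add: eqv_def)
  from opmul_wop_eqv[OF this Cons.IH[OF Cons.prems] inrange_cword[OF Cons.prems]]
  show ?case by (simp add: cword_Cons)
qed

definition nonI :: "nat \<times> loc \<Rightarrow> bool" where "nonI p \<longleftrightarrow> snd p \<noteq> Im"

lemma wst_filter: "wst (filter nonI W) S = wst W S"
  by (induction W) (auto simp: nonI_def)

lemma ww_filter: "ww (filter nonI W) S = ww W S"
  by (induction W) (auto simp: wst_filter[unfolded nonI_def] nonI_def)

lemma wop_filter: "wop (filter nonI W) = wop W"
  by (simp add: wop_def wst_filter ww_filter fun_eq_iff)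

definition bword :: "nat \<Rightarrow> nat \<Rightarrow> (loc \<times> loc) list \<Rightarrow> wd" where
  "bword L i es = filter nonI (cword L i Up (map fst es) @ cword L i Dn (map snd es))"

lemma inrange_filter: "inrange L W \<Longrightarrow> inrange L (filter P W)"
  by (auto simp: inrange_def)

lemma inrange_bword: "0 < L \<Longrightarrow> inrange L (bword L i es)"
  by (auto simp: bword_def intro!: inrange_filter inrange_cword)

lemma basis_wop: "0 < L \<Longrightarrow> eqv L (basis_elem L i es) (wop (bword L i es))"
  unfolding basis_elem_def bword_def wop_filter
  by (rule opmul_wop_eqv[OF chain_wop chain_wop inrange_cword])


definition opsat :: "wd \<Rightarrow> nat \<Rightarrow> loc list" where
  "opsat W m = map snd (filter (\<lambda>p. fst p = m \<and> snd p \<noteq> Im) W)"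

definition locw :: "wd \<Rightarrow> nat \<Rightarrow> loc" where
  "locw W m = (case opsat W m of [] \<Rightarrow> Im | e # _ \<Rightarrow> e)"

definition distinctw :: "wd \<Rightarrow> bool" where
  "distinctw W \<longleftrightarrow> (\<forall>m. length (opsat W m) \<le> 1)"

definition tog :: "nat set \<Rightarrow> nat \<Rightarrow> nat set" where
  "tog A x = (if x \<in> A then A - {x} else insert x A)"

definition symd :: "nat set \<Rightarrow> nat set \<Rightarrow> nat set" where
  "symd A B = (A - B) \<union> (B - A)"

fun dset :: "wd \<Rightarrow> nat set" where
  "dset [] = {}"
| "dset (p # W) = (if isodd (snd p) then tog (dset W) (fst p) else dset W)"

definition noc :: "wd \<Rightarrow> nat \<Rightarrow> bool" where
  "noc W m \<longleftrightarrow> (\<forall>p\<in>set W. fst p = m \<longrightarrow> \<not> isodd (snd p))"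

fun tsg :: "wd \<Rightarrow> nat \<Rightarrow> complex" where
  "tsg [] m = 1"
| "tsg (p # W) m = (if isodd (snd p) \<and> m < fst p then -1 else 1) * tsg W m"

definition zcnt :: "wd \<Rightarrow> nat \<Rightarrow> nat" where
  "zcnt W m = length (filter (\<lambda>p. p = (m, Zm)) W)"

lemma opsat_Nil[simp]: "opsat [] m = []" by (simp add: opsat_def)
lemma opsat_Cons: "opsat (p # W) m = (if fst p = m \<and> snd p \<noteq> Im then [snd p] else []) @ opsat W m"
  by (simp add: opsat_def)
lemma opsat_append[simp]: "opsat (A @ B) m = opsat A m @ opsat B m"
  by (simp add: opsat_def)

lemma isodd_nonIm: "isodd e \<Longrightarrow> e \<noteq> Im" by (cases e) auto

lemma F1: "ww W S \<noteq> 0 \<Longrightarrow> wst W S = symd S (dset W)"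
proof (induction W)
  case Nil then show ?case by (simp add: symd_def)
next
  case (Cons p W)
  obtain m e where p: "p = (m, e)" by force
  from Cons.prems have nz: "ww W S \<noteq> 0" "ewt e m (wst W S) \<noteq> 0" by (auto simp: p)
  from Cons.IH[OF nz(1)] have IH: "wst W S = symd S (dset W)" .
  show ?case using nz(2) IH by (cases e) (auto simp: p symd_def tog_def split: if_splits)
qed

lemma F0: "noc W m \<Longrightarrow> (m \<in> wst W S \<longleftrightarrow> m \<in> S)"
proof (induction W)
  case (Cons p W)
  obtain m' e where p: "p = (m', e)" by force
  from Cons.prems have "noc W m" "m' = m \<Longrightarrow> \<not> isodd e" by (auto simp: noc_def p)
  with Cons.IH show ?case by (cases e) (auto simp: p)
qed simp

lemma opsat_nil_noc: "opsat W m = [] \<Longrightarrow> noc W m"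
  by (auto simp: opsat_def noc_def filter_empty_conv dest: isodd_nonIm)

lemma F2: "opsat W m = [e] \<Longrightarrow> isodd e \<Longrightarrow> ww W S \<noteq> 0 \<Longrightarrow> (m \<in> S \<longleftrightarrow> e = Cm)"
proof (induction W)
  case Nil then show ?case by simp
next
  case (Cons p W)
  obtain m' e' where p: "p = (m', e')" by force
  from Cons.prems(3) have nz: "ww W S \<noteq> 0" "ewt e' m' (wst W S) \<noteq> 0" by (auto simp: p)
  show ?case
  proof (cases "m' = m \<and> e' \<noteq> Im")
    case True
    with Cons.prems(1) have "e' = e" "opsat W m = []" by (auto simp: p opsat_Cons)
    then have "m \<in> wst W S \<longleftrightarrow> m \<in> S" using F0 opsat_nil_noc by blast
    then show ?thesis using nz(2) True Cons.prems(2) \<open>e' = e\<close> by (cases e) auto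
  next
    case False
    with Cons.prems(1) have "opsat W m = [e]" by (auto simp: p opsat_Cons)
    from Cons.IH[OF this Cons.prems(2) nz(1)] show ?thesis .
  qed
qed

lemma card_tog:
  assumes "finite A"
  shows "((-1::complex) ^ card (tog A x)) = - ((-1) ^ card A)"
proof (cases "x \<in> A")
  case True
  obtain B where B: "A = insert x B" "x \<notin> B" using True by (metis Set.set_insert)
  then have "tog A x = B" by (auto simp: tog_def)
  moreover have "card A = Suc (card B)" using B assms by simp
  ultimately show ?thesis by simp
next
  case False
  then show ?thesis using assms by (simp add: tog_def)
qed

lemma tog_filter: "{y \<in> tog A x. P y} = (if P x then tog {y\<in>A. P y} x else {y\<in>A. P y})"
  by (auto simp: tog_def)

lemma jw_tog:
  assumes "finite R" "m \<noteq> m'"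
  shows "jw_sign m' (tog R m) = (if m < m' then - jw_sign m' R else jw_sign m' R)"
proof -
  have "{x \<in> tog R m. x < m'} = (if m < m' then tog {x\<in>R. x < m'} m else {x\<in>R. x < m'})"
    by (rule tog_filter)
  then show ?thesis using assms card_tog[of "{x\<in>R. x < m'}" m]
    by (auto simp: jw_sign_def)
qed

lemma finite_tog[simp]: "finite (tog A x) \<longleftrightarrow> finite A"
  by (auto simp: tog_def)

lemma finite_wst: "finite S \<Longrightarrow> finite (wst W S)"
proof (induction W)
  case (Cons p W) then show ?case by (cases "snd p") auto
qed simp

lemma F3:
  assumes "finite S" "noc W m"
  shows "wst W (tog S m) = tog (wst W S) m \<and>
         ww W (tog S m) = (-1) ^ zcnt W m * tsg W m * ww W S"
  using assms(2)
proof (induction W)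
  case Nil then show ?case by (simp add: zcnt_def)
next
  case (Cons p W)
  obtain m' e where p: "p = (m', e)" by force
  from Cons.prems have nc: "noc W m" and ne: "m' = m \<Longrightarrow> \<not> isodd e" by (auto simp: noc_def p)
  note IH = Cons.IH[OF nc]
  have fin: "finite (wst W S)" using finite_wst[OF assms(1)] .
  have st: "estep e m' (tog (wst W S) m) = tog (estep e m' (wst W S)) m"
    using ne by (cases e) (auto simp: tog_def)
  have wt: "ewt e m' (tog (wst W S) m) =
     (if e = Zm \<and> m' = m then -1 else 1) * (if isodd e \<and> m < m' then -1 else 1) * ewt e m' (wst W S)"
  proof (cases e)
    case Cm
    with ne have "m' \<noteq> m" by auto
    then have "m \<noteq> m'" by simp
    with Cm show ?thesis using jw_tog[OF fin \<open>m \<noteq> m'\<close>] by (auto simp: tog_def)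
  next
    case Cd
    with ne have "m \<noteq> m'" by auto
    with Cd show ?thesis using jw_tog[OF fin \<open>m \<noteq> m'\<close>] by (auto simp: tog_def)
  next
    case Zm then show ?thesis by (auto simp: tog_def)
  qed simp
  have zc: "zcnt (p # W) m = (if e = Zm \<and> m' = m then Suc (zcnt W m) else zcnt W m)"
    by (auto simp: zcnt_def p)
  show ?case using IH st wt zc by (auto simp: p)
qed

lemma tsg_card: "finite (dset W) \<Longrightarrow> tsg W m = (-1) ^ card {x \<in> dset W. m < x}"
proof (induction W)
  case Nil then show ?case by simp
next
  case (Cons p W)
  have fin: "finite (dset W)" using Cons.prems by (auto split: if_splits)
  note IH = Cons.IH[OF fin]
  show ?case
  proof (cases "isodd (snd p)")
    case True
    have "{x \<in> tog (dset W) (fst p). m < x} = (if m < fst p then tog {x \<in> dset W. m < x} (fst p) else {x \<in> dset W. m < x})"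
      by (rule tog_filter)
    then show ?thesis using True IH card_tog[of "{x \<in> dset W. m < x}" "fst p"] fin by auto
  qed (simp add: IH)
qed

lemma finite_dset: "finite (dset W)"
  by (induction W) (auto simp: tog_def)

lemma dset_mem: "m \<in> dset W \<longleftrightarrow> odd (length (filter isodd (opsat W m)))"
proof (induction W)
  case (Cons p W)
  then show ?case by (cases "snd p") (auto simp: opsat_Cons tog_def)
qed simp

lemma dset_mem1: "length (opsat W m) \<le> 1 \<Longrightarrow> (m \<in> dset W \<longleftrightarrow> isodd (locw W m))"
  unfolding dset_mem locw_def
  by (cases "opsat W m" rule: list.exhaust; cases "tl (opsat W m)" rule: list.exhaust)
     (auto simp: isodd.simps)

lemma zcnt_opsat: "zcnt W m = length (filter (\<lambda>e. e = Zm) (opsat W m))"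
  by (induction W) (auto simp: zcnt_def opsat_Cons)

lemma ip_wop:
  assumes "inrange L A"
  shows "ip L (wop A) (wop B) =
    (\<Sum>S\<in>Pow (modes L). if wst A S = wst B S then ww A S * ww B S else 0)"
proof -
  have "ip L (wop A) (wop B) = (\<Sum>S\<in>Pow (modes L). \<Sum>T\<in>Pow (modes L). wop A T S * wop B T S)"
    unfolding ip_def by (rule sum.swap)
  also have "\<dots> = (\<Sum>S\<in>Pow (modes L). if wst A S = wst B S then ww A S * ww B S else 0)"
  proof (rule sum.cong[OF refl])
    fix S assume S: "S \<in> Pow (modes L)"
    have P: "wst A S \<in> Pow (modes L)" using wst_pow[OF assms] S by auto
    have "\<And>T. wop A T S * wop B T S = (if wst A S = T then (if wst A S = wst B S then ww A S * ww B S else 0) else 0)"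
      by (auto simp: wop_def)
    then show "(\<Sum>T\<in>Pow (modes L). wop A T S * wop B T S) = (if wst A S = wst B S then ww A S * ww B S else 0)"
      using P by simp
  qed
  finally show ?thesis .
qed

lemma symd_cancel: "symd S A = symd S B \<Longrightarrow> A = B"
  unfolding symd_def by blast

lemma tog_tog[simp]: "tog (tog A x) x = A"
  by (auto simp: tog_def)

lemma sum_tog_zero:
  assumes "m \<in> M" "finite M" "\<And>S. S \<in> Pow M \<Longrightarrow> g (tog S m) = - g S"
  shows "(\<Sum>S\<in>Pow M. g S) = (0::complex)"
proof -
  have "(\<Sum>S\<in>Pow M. g S) = (\<Sum>S\<in>Pow M. g (tog S m))"
    apply (rule sum.reindex_bij_witness[where i="\<lambda>S. tog S m" and j="\<lambda>S. tog S m"])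
        apply simp
       apply (use assms(1) in \<open>auto simp: tog_def\<close>)[1]
      apply simp
     apply (use assms(1) in \<open>auto simp: tog_def\<close>)[1]
    apply simp
    done
  also have "\<dots> = - (\<Sum>S\<in>Pow M. g S)" using assms(3) by (simp add: sum_negf)
  finally show ?thesis by simp
qed

lemma locw_out: "inrange L W \<Longrightarrow> \<not> m < 2 * L \<Longrightarrow> locw W m = Im"
proof -
  assume "inrange L W" "\<not> m < 2 * L"
  then have "opsat W m = []"
    by (auto simp: opsat_def inrange_def filter_empty_conv)
  then show ?thesis by (simp add: locw_def)
qed

lemma noc_from_opsat: "\<forall>e\<in>set (opsat W m). \<not> isodd e \<Longrightarrow> noc W m"
  unfolding noc_def opsat_def using isodd_nonIm by fastforce

lemma len1_cases: "length xs \<le> 1 \<Longrightarrow> xs = [] \<or> (\<exists>e. xs = [e])"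
  by (cases xs) auto

lemma GC:
  assumes rO: "inrange L Q" and rW: "inrange L W" and dO: "distinctw Q"
    and lW: "length (opsat W m) \<le> 1" and ne: "locw W m \<noteq> locw Q m"
  shows "ip L (wop Q) (wop W) = 0"
proof -
  have lO: "length (opsat Q m) \<le> 1" using dO by (simp add: distinctw_def)
  have mM: "m \<in> modes L"
  proof (rule ccontr)
    assume "m \<notin> modes L"
    then have "\<not> m < 2 * L" by (simp add: modes_def)
    then show False using ne locw_out[OF rO] locw_out[OF rW] by metis
  qed
  define g where "g S = (if wst Q S = wst W S then ww Q S * ww W S else 0)" for S
  have ipg: "ip L (wop Q) (wop W) = (\<Sum>S\<in>Pow (modes L). g S)"
    unfolding ip_wop[OF rO] g_def ..
  have zero_if_dne: "\<And>S. dset Q \<noteq> dset W \<Longrightarrow> g S = 0"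
  proof -
    fix S assume d: "dset Q \<noteq> dset W"
    show "g S = 0"
    proof (rule ccontr)
      assume "g S \<noteq> 0"
      then have "wst Q S = wst W S" "ww Q S \<noteq> 0" "ww W S \<noteq> 0" by (auto simp: g_def split: if_splits)
      then have "symd S (dset Q) = symd S (dset W)" using F1 by metis
      then show False using d symd_cancel by blast
    qed
  qed
  show ?thesis
  proof (cases "isodd (locw Q m) = isodd (locw W m)")
    case False
    then have "dset Q \<noteq> dset W" using dset_mem1[OF lO] dset_mem1[OF lW] by auto
    then show ?thesis using ipg zero_if_dne by simp
  next
    case True
    show ?thesis
    proof (cases "isodd (locw Q m)")
      case oddO: True
      with True have oddW: "isodd (locw W m)" by simp
      have "opsat Q m = [locw Q m]" using lO oddO
        by (cases "opsat Q m" rule: list.exhaust) (auto simp: locw_def)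
      moreover have "opsat W m = [locw W m]" using lW oddW
        by (cases "opsat W m" rule: list.exhaust) (auto simp: locw_def)
      moreover have "locw Q m = Cm \<longleftrightarrow> locw W m \<noteq> Cm"
        using oddO oddW ne by (cases "locw Q m"; cases "locw W m"; simp)
      ultimately have "\<And>S. g S = 0"
      proof -
        fix S
        assume a: "opsat Q m = [locw Q m]" "opsat W m = [locw W m]" "(locw Q m = Cm) = (locw W m \<noteq> Cm)"
        show "g S = 0"
        proof (cases "ww Q S = 0 \<or> ww W S = 0")
          case True then show ?thesis by (auto simp: g_def)
        next
          case False
          then have "(m \<in> S) = (locw Q m = Cm)" "(m \<in> S) = (locw W m = Cm)"
            using F2[OF a(1) oddO] F2[OF a(2) oddW] by auto
          then show ?thesis using a(3) by simp
        qed
      qed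
      then show ?thesis using ipg by simp
    next
      case evO: False
      with True have evW: "\<not> isodd (locw W m)" by simp
      show ?thesis
      proof (cases "dset Q = dset W")
        case False then show ?thesis using ipg zero_if_dne by simp
      next
        case deq: True
        have ncO: "noc Q m"
        proof (rule noc_from_opsat)
          have "opsat Q m = [] \<or> opsat Q m = [locw Q m]" using lO
            by (cases "opsat Q m" rule: list.exhaust) (auto simp: locw_def)
          then show "\<forall>e\<in>set (opsat Q m). \<not> isodd e" using evO by auto
        qed
        have ncW: "noc W m"
        proof (rule noc_from_opsat)
          have "opsat W m = [] \<or> opsat W m = [locw W m]" using lW
            by (cases "opsat W m" rule: list.exhaust) (auto simp: locw_def)
          then show "\<forall>e\<in>set (opsat W m). \<not> isodd e" using evW by auto
        qed
        have zO: "zcnt Q m = (if locw Q m = Zm then 1 else 0)"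
          using lO unfolding zcnt_opsat locw_def
          by (cases "opsat Q m" rule: list.exhaust) auto
        have zW: "zcnt W m = (if locw W m = Zm then 1 else 0)"
          using lW unfolding zcnt_opsat locw_def
          by (cases "opsat W m" rule: list.exhaust) auto
        have zz: "(-1::complex) ^ zcnt Q m * (-1) ^ zcnt W m = -1"
        proof -
          have "locw Q m \<in> {Zm, Im}" using evO by (cases "locw Q m") simp_all
          moreover have "locw W m \<in> {Zm, Im}" using evW by (cases "locw W m") simp_all
          ultimately show ?thesis using zO zW ne by auto
        qed
        have ts: "tsg Q m * tsg W m = 1"
          using tsg_card[OF finite_dset, of Q m] tsg_card[OF finite_dset, of W m] deq
          by (simp flip: power_add)
        have "\<And>S. S \<in> Pow (modes L) \<Longrightarrow> g (tog S m) = - g S"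
        proof -
          fix S assume S: "S \<in> Pow (modes L)"
          then have fS: "finite S" by (auto intro: finite_subset)
          note a = F3[OF fS ncO] and b = F3[OF fS ncW]
          have inj: "tog X m = tog Y m \<longleftrightarrow> X = Y" for X Y by (auto simp: tog_def split: if_splits)
          have "ww Q (tog S m) * ww W (tog S m) =
                ((-1) ^ zcnt Q m * (-1) ^ zcnt W m) * (tsg Q m * tsg W m) * (ww Q S * ww W S)"
            using a b by (simp add: algebra_simps)
          also have "\<dots> = - (ww Q S * ww W S)" using zz ts by simp
          finally show "g (tog S m) = - g S" using a b inj by (simp add: g_def)
        qed
        then show ?thesis using ipg sum_tog_zero[OF mM finite_modes] by simp
      qed
    qed
  qed
qed


lemma ip_cong:
  assumes "\<And>T S. T \<in> Pow (modes L) \<Longrightarrow> S \<in> Pow (modes L) \<Longrightarrow> Y T S = Z T S"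
  shows "ip L X Y = ip L X Z"
  unfolding ip_def using assms by (auto intro!: sum.cong)

lemma ip_scale: "ip L X (\<lambda>T S. a * Y T S) = a * ip L X Y"
  unfolding ip_def by (simp add: sum_distrib_left algebra_simps)

lemma ip_add: "ip L X (\<lambda>T S. Y T S + Z T S) = ip L X Y + ip L X Z"
  unfolding ip_def by (simp add: sum.distrib algebra_simps)

lemma ip_diff: "ip L X (\<lambda>T S. Y T S - Z T S) = ip L X Y - ip L X Z"
  unfolding ip_def by (simp add: sum_subtractf algebra_simps)

lemma ip_sum: "ip L X (\<lambda>T S. \<Sum>x\<in>A. f x T S) = (\<Sum>x\<in>A. ip L X (f x))"
proof -
  have "ip L X (\<lambda>T S. \<Sum>x\<in>A. f x T S) =
     (\<Sum>T\<in>Pow (modes L). \<Sum>S\<in>Pow (modes L). \<Sum>x\<in>A. X T S * f x T S)"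
    unfolding ip_def by (simp add: sum_distrib_left)
  also have "\<dots> = (\<Sum>T\<in>Pow (modes L). \<Sum>x\<in>A. \<Sum>S\<in>Pow (modes L). X T S * f x T S)"
    by (rule sum.cong[OF refl], rule sum.swap)
  also have "\<dots> = (\<Sum>x\<in>A. \<Sum>T\<in>Pow (modes L). \<Sum>S\<in>Pow (modes L). X T S * f x T S)"
    by (rule sum.swap)
  finally show ?thesis unfolding ip_def .
qed

lemma ip_zero: "ip L X (\<lambda>T S. 0) = 0"
  unfolding ip_def by simp

definition rel :: "nat \<Rightarrow> complex \<Rightarrow> wd \<Rightarrow> wd \<Rightarrow> bool" where
  "rel L a A B \<longleftrightarrow> (\<forall>S\<in>Pow (modes L). (ww A S \<noteq> 0 \<longrightarrow> wst A S = wst B S) \<and> ww A S = a * ww B S)"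

lemma rel_refl: "rel L 1 A A"
  by (simp add: rel_def)

lemma rel_trans: "rel L a A B \<Longrightarrow> rel L b B C \<Longrightarrow> rel L (a * b) A C"
  unfolding rel_def
proof (intro ballI conjI impI)
  fix S assume h1: "\<forall>S\<in>Pow (modes L). (ww A S \<noteq> 0 \<longrightarrow> wst A S = wst B S) \<and> ww A S = a * ww B S"
    and h2: "\<forall>S\<in>Pow (modes L). (ww B S \<noteq> 0 \<longrightarrow> wst B S = wst C S) \<and> ww B S = b * ww C S"
    and S: "S \<in> Pow (modes L)"
  from h1 S have a1: "ww A S \<noteq> 0 \<longrightarrow> wst A S = wst B S" "ww A S = a * ww B S" by auto
  from h2 S have a2: "ww B S \<noteq> 0 \<longrightarrow> wst B S = wst C S" "ww B S = b * ww C S" by auto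
  show "ww A S = a * b * ww C S" using a1 a2 by simp
  assume "ww A S \<noteq> 0"
  then have "ww B S \<noteq> 0" using a1 by auto
  then show "wst A S = wst C S" using a1 a2 \<open>ww A S \<noteq> 0\<close> by simp
qed

lemma rel_sym: "rel L a A B \<Longrightarrow> a * a = 1 \<Longrightarrow> rel L a B A"
  unfolding rel_def
proof (intro ballI conjI impI)
  fix S assume h1: "\<forall>S\<in>Pow (modes L). (ww A S \<noteq> 0 \<longrightarrow> wst A S = wst B S) \<and> ww A S = a * ww B S"
    and aa: "a * a = 1" and S: "S \<in> Pow (modes L)"
  from h1 S have a1: "ww A S \<noteq> 0 \<longrightarrow> wst A S = wst B S" "ww A S = a * ww B S" by auto
  have "a * ww A S = ww B S" using a1(2) aa by (simp add: mult.assoc[symmetric])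
  then show "ww B S = a * ww A S" by simp
  assume "ww B S \<noteq> 0"
  then have "ww A S \<noteq> 0" using \<open>a * ww A S = ww B S\<close> by auto
  then show "wst B S = wst A S" using a1 by simp
qed

lemma rel_ctx:
  assumes "rel L a A B" "a \<noteq> 0" "inrange L V"
  shows "rel L a (U @ A @ V) (U @ B @ V)"
  unfolding rel_def
proof (intro ballI)
  fix S assume S: "S \<in> Pow (modes L)"
  define R where "R = wst V S"
  have R: "R \<in> Pow (modes L)" using wst_pow[OF assms(3)] S by (auto simp: R_def)
  from assms(1) R have h: "ww A R \<noteq> 0 \<longrightarrow> wst A R = wst B R" "ww A R = a * ww B R"
    by (auto simp: rel_def)
  show "(ww (U @ A @ V) S \<noteq> 0 \<longrightarrow> wst (U @ A @ V) S = wst (U @ B @ V) S) \<and>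
        ww (U @ A @ V) S = a * ww (U @ B @ V) S"
  proof (cases "ww A R = 0")
    case True
    then have "ww B R = 0" using h assms(2) by simp
    then show ?thesis using True by (simp add: R_def[symmetric])
  next
    case False
    then show ?thesis using h by (simp add: R_def[symmetric])
  qed
qed

lemma rel_wop:
  assumes "rel L a A B" "a \<noteq> 0" "S \<in> Pow (modes L)"
  shows "wop A T S = a * wop B T S"
proof -
  from assms have h: "ww A S \<noteq> 0 \<longrightarrow> wst A S = wst B S" "ww A S = a * ww B S"
    by (auto simp: rel_def)
  show ?thesis
  proof (cases "ww A S = 0")
    case True
    then have "ww B S = 0" using h assms(2) by simp
    then show ?thesis using True by (simp add: wop_def)
  qed (use h in \<open>auto simp: wop_def\<close>)
qed

lemma rel_ip:
  assumes "rel L a A B" "a \<noteq> 0"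
  shows "ip L X (wop A) = a * ip L X (wop B)"
proof -
  have "ip L X (wop A) = ip L X (\<lambda>T S. a * wop B T S)"
    by (rule ip_cong) (use rel_wop[OF assms] in auto)
  then show ?thesis by (simp add: ip_scale)
qed

lemma zero_word_ip:
  assumes "\<And>R. R \<in> Pow (modes L) \<Longrightarrow> ww A R = 0" "inrange L V"
  shows "ip L X (wop (U @ A @ V)) = 0"
proof -
  have "ip L X (wop (U @ A @ V)) = ip L X (\<lambda>T S. 0)"
  proof (rule ip_cong)
    fix T S assume "S \<in> Pow (modes L)"
    then have "wst V S \<in> Pow (modes L)" using wst_pow[OF assms(2)] by auto
    then show "wop (U @ A @ V) T S = 0" using assms(1) by (simp add: wop_def)
  qed
  then show ?thesis by (simp add: ip_zero)
qed

lemma jw_ins: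
  assumes "finite R" "m' \<noteq> m"
  shows "jw_sign m (insert m' R) = (if m' < m \<and> m' \<notin> R then - jw_sign m R else jw_sign m R)"
proof (cases "m' \<in> R")
  case True then show ?thesis by (simp add: insert_absorb)
next
  case False
  then have "insert m' R = tog R m'" by (simp add: tog_def)
  then show ?thesis using jw_tog[OF assms(1), of m' m] assms(2) False by auto
qed

lemma jw_del:
  assumes "finite R" "m' \<noteq> m"
  shows "jw_sign m (R - {m'}) = (if m' < m \<and> m' \<in> R then - jw_sign m R else jw_sign m R)"
proof (cases "m' \<in> R")
  case False then show ?thesis by simp
next
  case True
  then have "R - {m'} = tog R m'" by (simp add: tog_def)
  then show ?thesis using jw_tog[OF assms(1), of m' m] assms(2) True by auto
qed

lemma ewt_comm:
  assumes "finite R" "m \<noteq> m'"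
  shows "ewt e m (estep e' m' R) * ewt e' m' R =
         (if isodd e \<and> isodd e' \<and> m' < m then -1 else 1) * (ewt e m R * ewt e' m' R)"
proof (cases e')
  case Cm
  show ?thesis
  proof (cases "m' \<in> R")
    case True
    then show ?thesis using Cm assms jw_del[OF assms(1) assms(2)[symmetric]]
      by (cases e) auto
  qed (use Cm in simp)
next
  case Cd
  show ?thesis
  proof (cases "m' \<in> R")
    case False
    then show ?thesis using Cd assms jw_ins[OF assms(1) assms(2)[symmetric]]
      by (cases e) auto
  qed (use Cd in simp)
qed simp_all

definition swsg :: "loc \<Rightarrow> loc \<Rightarrow> complex" where
  "swsg e e' = (if isodd e \<and> isodd e' then -1 else 1)"

lemma swap_rel:
  assumes "m \<noteq> m'"
  shows "rel L (swsg e e') [(m, e), (m', e')] [(m', e'), (m, e)]"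
  unfolding rel_def
proof (intro ballI conjI impI)
  fix S assume "S \<in> Pow (modes L)"
  then have fS: "finite S" by (auto intro: finite_subset)
  show "wst [(m, e), (m', e')] S = wst [(m', e'), (m, e)] S"
    using assms by (cases e; cases e') auto
  show "ww [(m, e), (m', e')] S = swsg e e' * ww [(m', e'), (m, e)] S"
    using ewt_comm[OF fS assms, of e e'] ewt_comm[OF fS assms[symmetric], of e' e] assms
    by (auto simp: swsg_def)
qed

lemma swsg_sq: "swsg e e' * swsg e e' = 1" by (simp add: swsg_def)
lemma swsg_nz: "swsg e e' \<noteq> 0" by (simp add: swsg_def)

definition nodd :: "wd \<Rightarrow> nat" where "nodd V = length (filter (\<lambda>p. isodd (snd p)) V)"

definition msg :: "loc \<Rightarrow> wd \<Rightarrow> complex" where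
  "msg e V = (if isodd e then (-1) ^ nodd V else 1)"

lemma msg_sq: "msg e V * msg e V = 1"
  by (simp add: msg_def flip: power_add)

lemma msg_nz: "msg e V \<noteq> 0" by (simp add: msg_def)

lemma move_rel:
  assumes "\<forall>v\<in>set V. fst v \<noteq> m" "inrange L V"
  shows "rel L (msg e V) ((m, e) # V) (V @ [(m, e)])"
  using assms
proof (induction V)
  case Nil then show ?case by (simp add: rel_refl msg_def nodd_def)
next
  case (Cons v V)
  obtain m' e' where v: "v = (m', e')" by force
  have mm: "m \<noteq> m'" using Cons.prems by (auto simp: v)
  have r1: "rel L (swsg e e') ((m, e) # v # V) (v # (m, e) # V)"
    using rel_ctx[OF swap_rel[OF mm, of L e e'] swsg_nz, of V "[]"] Cons.prems by (simp add: v)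
  have IH: "rel L (msg e V) ((m, e) # V) (V @ [(m, e)])" using Cons by auto
  have r2: "rel L (msg e V) (v # (m, e) # V) (v # V @ [(m, e)])"
    using rel_ctx[OF IH msg_nz, where U="[v]" and V="[]"] by simp
  have "msg e (v # V) = swsg e e' * msg e V"
    by (auto simp: msg_def swsg_def nodd_def v)
  then show ?case using rel_trans[OF r1 r2] by simp
qed

lemma rel_zcd: "rel L 1 [(m, Zm), (m, Cd)] [(m, Cd)]"
  by (auto simp: rel_def)

lemma rel_cdz: "rel L (-1) [(m, Cd), (m, Zm)] [(m, Cd)]"
  by (auto simp: rel_def)

lemma rel_zc: "rel L (-1) [(m, Zm), (m, Cm)] [(m, Cm)]"
  by (auto simp: rel_def)

lemma rel_cz: "rel L 1 [(m, Cm), (m, Zm)] [(m, Cm)]"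
  by (auto simp: rel_def)

lemma ww_cc: "ww [(m, Cm), (m, Cm)] R = 0" by simp
lemma ww_cdcd: "ww [(m, Cd), (m, Cd)] R = 0" by simp

lemma car_ip:
  assumes "inrange L V"
  shows "ip L X (wop (U @ [(m, Cm), (m, Cd)] @ V)) + ip L X (wop (U @ [(m, Cd), (m, Cm)] @ V))
         = ip L X (wop (U @ V))"
proof -
  have "ip L X (wop (U @ [(m, Cm), (m, Cd)] @ V)) + ip L X (wop (U @ [(m, Cd), (m, Cm)] @ V))
       = ip L X (\<lambda>T S. wop (U @ [(m, Cm), (m, Cd)] @ V) T S + wop (U @ [(m, Cd), (m, Cm)] @ V) T S)"
    by (simp add: ip_add)
  also have "\<dots> = ip L X (wop (U @ V))"
  proof (rule ip_cong)
    fix T S assume "S \<in> Pow (modes L)"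
    define R where "R = wst V S"
    show "wop (U @ [(m, Cm), (m, Cd)] @ V) T S + wop (U @ [(m, Cd), (m, Cm)] @ V) T S = wop (U @ V) T S"
    proof (cases "m \<in> R")
      case True
      then have "insert m (R - {m}) = R" by auto
      then show ?thesis using True by (simp add: wop_def R_def[symmetric] jw_sq)
    next
      case False
      then have "insert m R - {m} = R" by auto
      then show ?thesis using False by (simp add: wop_def R_def[symmetric] jw_sq)
    qed
  qed
  finally show ?thesis .
qed

lemma neg1_cases: "(-1::complex) ^ n = 1 \<or> (-1::complex) ^ n = -1"
  by (cases "even n") simp_all

lemma ww_vals: "ww W S \<in> {-1, 0, 1}"
proof (induction W)
  case (Cons p W)
  have "ewt (snd p) (fst p) (wst W S) \<in> {-1, 0, 1}"
    using neg1_cases[of "card {m' \<in> wst W S. m' < fst p}"]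
    by (cases "snd p") (auto simp: jw_sign_def)
  with Cons show ?case by auto
qed simp

lemma ww_nz:
  assumes "distinctw W" "\<And>p. p \<in> set W \<Longrightarrow> snd p = Cm \<Longrightarrow> fst p \<in> S"
    "\<And>p. p \<in> set W \<Longrightarrow> snd p = Cd \<Longrightarrow> fst p \<notin> S"
  shows "ww W S \<noteq> 0"
  using assms
proof (induction W)
  case (Cons p W)
  obtain m e where p: "p = (m, e)" by force
  have dW: "distinctw W" using Cons.prems(1)
  proof -
    have "\<And>m. length (opsat W m) \<le> 1"
    proof -
      fix m
      have "length (opsat (p # W) m) \<le> 1" using Cons.prems(1) by (simp add: distinctw_def)
      then show "length (opsat W m) \<le> 1" by (simp add: opsat_Cons split: if_splits)
    qed
    then show ?thesis by (simp add: distinctw_def)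
  qed
  have IH: "ww W S \<noteq> 0" using Cons dW by auto
  have "isodd e \<Longrightarrow> noc W m"
  proof (rule noc_from_opsat)
    assume o: "isodd e"
    have "length (opsat (p # W) m) \<le> 1" using Cons.prems(1) by (simp add: distinctw_def)
    then have "opsat W m = []" using o isodd_nonIm[OF o] by (simp add: p opsat_Cons)
    then show "\<forall>e\<in>set (opsat W m). \<not> isodd e" by simp
  qed
  then have "isodd e \<Longrightarrow> (m \<in> wst W S \<longleftrightarrow> m \<in> S)" using F0 by blast
  then have "ewt e m (wst W S) \<noteq> 0" using Cons.prems(2,3)[of p] by (cases e) (auto simp: p)
  then show ?case using IH by (simp add: p)
qed simp

lemma opsat_mem: "p \<in> set W \<Longrightarrow> snd p \<noteq> Im \<Longrightarrow> snd p \<in> set (opsat W (fst p))"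
  by (force simp: opsat_def)

lemma ip_self_nz:
  assumes "distinctw W" "inrange L W"
  shows "ip L (wop W) (wop W) \<noteq> 0"
proof -
  define S0 where "S0 = {fst p |p. p \<in> set W \<and> snd p = Cm}"
  have S0: "S0 \<in> Pow (modes L)" using assms(2) by (auto simp: S0_def inrange_def modes_def)
  have nz: "ww W S0 \<noteq> 0"
  proof (rule ww_nz[OF assms(1)])
    fix p assume "p \<in> set W" "snd p = Cm" then show "fst p \<in> S0" unfolding S0_def by blast
  next
    fix p assume p: "p \<in> set W" "snd p = Cd"
    show "fst p \<notin> S0"
    proof
      assume "fst p \<in> S0"
      then obtain p' where p': "p' \<in> set W" "snd p' = Cm" "fst p' = fst p" by (auto simp: S0_def)
      have "Cm \<in> set (opsat W (fst p))" "Cd \<in> set (opsat W (fst p))"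
        using opsat_mem[OF p(1)] opsat_mem[OF p'(1)] p p' by auto
      moreover have "length (opsat W (fst p)) \<le> 1" using assms(1) by (simp add: distinctw_def)
      ultimately show False
        by (cases "opsat W (fst p)" rule: list.exhaust) auto
    qed
  qed
  have "ip L (wop W) (wop W) = (\<Sum>S\<in>Pow (modes L). ww W S * ww W S)"
    by (simp add: ip_wop[OF assms(2)])
  also have "\<dots> = (\<Sum>S\<in>Pow (modes L). of_nat (if ww W S \<noteq> 0 then 1 else 0))"
  proof (rule sum.cong[OF refl])
    fix S
    have "ww W S \<in> {-1, 0, 1}" by (rule ww_vals)
    then show "ww W S * ww W S = of_nat (if ww W S \<noteq> 0 then 1 else 0)" by auto
  qed
  also have "\<dots> = of_nat (\<Sum>S\<in>Pow (modes L). (if ww W S \<noteq> 0 then 1 else 0))"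
    by simp
  finally have eq: "ip L (wop W) (wop W) = of_nat (\<Sum>S\<in>Pow (modes L). (if ww W S \<noteq> 0 then 1 else 0))" .
  have "(\<Sum>S\<in>Pow (modes L). (if ww W S \<noteq> 0 then 1 else 0::nat)) \<noteq> 0"
    using S0 nz by (simp add: sum_eq_0_iff) blast
  then have "(of_nat (\<Sum>S\<in>Pow (modes L). (if ww W S \<noteq> 0 then 1 else 0)) :: complex) \<noteq> 0"
    by (metis of_nat_eq_0_iff)
  then show ?thesis unfolding eq .
qed


definition h1 :: "nat \<Rightarrow> nat \<Rightarrow> spin \<Rightarrow> wd" where
  "h1 L j s = [(mode L j s, Cd), (mode L (j + 1) s, Cm)]"
definition h2 :: "nat \<Rightarrow> nat \<Rightarrow> spin \<Rightarrow> wd" where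
  "h2 L j s = [(mode L (j + 1) s, Cd), (mode L j s, Cm)]"
definition zz :: "nat \<Rightarrow> nat \<Rightarrow> wd" where
  "zz L j = [(mode L j Up, Zm), (mode L j Dn, Zm)]"

definition Hs :: "nat \<Rightarrow> real \<Rightarrow> op" where
  "Hs L U = (\<lambda>T S. \<Sum>j<L. (\<Sum>s\<in>{Up, Dn}. -2 * (wop (h1 L j s) T S + wop (h2 L j s) T S))
                        + complex_of_real U * wop (zz L j) T S)"

definition cm :: "nat \<Rightarrow> op \<Rightarrow> wd \<Rightarrow> wd \<Rightarrow> complex" where
  "cm L X bw t = ip L X (wop (bw @ t)) - ip L X (wop (t @ bw))"

definition Gam :: "nat \<Rightarrow> real \<Rightarrow> op \<Rightarrow> wd \<Rightarrow> complex" where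
  "Gam L U X bw = (\<Sum>j<L. (\<Sum>s\<in>{Up, Dn}. -2 * (cm L X bw (h1 L j s) + cm L X bw (h2 L j s)))
                        + complex_of_real U * cm L X bw (zz L j))"

lemma opmul_scale:
  "opmul L (\<lambda>T S. a * A T S) (\<lambda>T S. b * B T S) T S = a * b * opmul L A B T S"
  unfolding opmul_def by (simp add: sum_distrib_left algebra_simps)

lemma opmul_sum_left:
  "opmul L (\<lambda>T S. \<Sum>x\<in>A. f x T S) B T S = (\<Sum>x\<in>A. opmul L (f x) B T S)"
  unfolding opmul_def by (simp add: sum_distrib_right) (rule sum.swap)

lemma opmul_sum_right:
  "opmul L B (\<lambda>T S. \<Sum>x\<in>A. f x T S) T S = (\<Sum>x\<in>A. opmul L B (f x) T S)"
  unfolding opmul_def by (simp add: sum_distrib_left) (rule sum.swap)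

lemma opmul_scale_left: "opmul L (\<lambda>T S. a * A T S) B T S = a * opmul L A B T S"
  unfolding opmul_def by (simp add: sum_distrib_left algebra_simps)

lemma opmul_scale_right: "opmul L B (\<lambda>T S. a * A T S) T S = a * opmul L B A T S"
  unfolding opmul_def by (simp add: sum_distrib_left algebra_simps)

lemma opmul_add_left: "opmul L (\<lambda>T S. A T S + B T S) C T S = opmul L A C T S + opmul L B C T S"
  unfolding opmul_def by (simp add: sum.distrib algebra_simps)

lemma opmul_add_right: "opmul L C (\<lambda>T S. A T S + B T S) T S = opmul L C A T S + opmul L C B T S"
  unfolding opmul_def by (simp add: sum.distrib algebra_simps)

lemma inrange_h1: "0 < L \<Longrightarrow> inrange L (h1 L j s)" by (simp add: h1_def mode_lt)
lemma inrange_h2: "0 < L \<Longrightarrow> inrange L (h2 L j s)" by (simp add: h2_def mode_lt)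
lemma inrange_zz: "0 < L \<Longrightarrow> inrange L (zz L j)" by (simp add: zz_def mode_lt)

lemma hop_wop:
  assumes "0 < L" "T \<in> Pow (modes L)" "S \<in> Pow (modes L)"
  shows "opmul L (cdag L j s) (cop L (Suc j) s) T S = wop (h1 L j s) T S"
    and "opmul L (cdag L (Suc j) s) (cop L j s) T S = wop (h2 L j s) T S"
  using opmul_wop[of L "[(mode L (j+1) s, Cm)]" T S "[(mode L j s, Cd)]"]
        opmul_wop[of L "[(mode L j s, Cm)]" T S "[(mode L (j+1) s, Cd)]"] assms
  by (auto simp: cdag_def cop_def cre_wop ann_wop h1_def h2_def mode_lt)

lemma int_wop:
  assumes "0 < L" "T \<in> Pow (modes L)" "S \<in> Pow (modes L)"
  shows "opmul L (\<lambda>T' S'. nop L j Up T' S' - idop T' S' / 2) (\<lambda>T' S'. nop L j Dn T' S' - idop T' S' / 2) T S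
         = 1/4 * wop (zz L j) T S"
proof -
  have e: "(\<lambda>T' S'. nop L j s T' S' - idop T' S' / 2) = (\<lambda>T' S'. (1/2) * zop L j s T' S')" for s
    by (auto simp: zop_def fun_eq_iff)
  have "opmul L (\<lambda>T' S'. (1/2) * zop L j Up T' S') (\<lambda>T' S'. (1/2) * zop L j Dn T' S') T S
        = 1/4 * opmul L (zop L j Up) (zop L j Dn) T S"
    using opmul_scale[where a="1/2" and b="1/2" and A="zop L j Up" and B="zop L j Dn" and L=L and T=T and S=S]
    by simp
  also have "opmul L (zop L j Up) (zop L j Dn) T S = opmul L (wop [(mode L j Up, Zm)]) (wop [(mode L j Dn, Zm)]) T S"
    by (rule opmul_cong) (use assms zop_wop in \<open>auto simp: eqv_def\<close>)
  also have "\<dots> = wop (zz L j) T S"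
    using opmul_wop[of L "[(mode L j Dn, Zm)]" T S "[(mode L j Up, Zm)]"] assms
    by (simp add: zz_def mode_lt)
  finally show ?thesis unfolding e .
qed

lemma H_eqv: "0 < L \<Longrightarrow> eqv L (hubbard L U) (Hs L U)"
  unfolding eqv_def
proof (intro ballI)
  fix T S assume "0 < L" "T \<in> Pow (modes L)" "S \<in> Pow (modes L)"
  note hw = hop_wop[OF this] and iw = int_wop[OF this]
  show "hubbard L U T S = Hs L U T S"
    unfolding hubbard_def Hs_def
    by (simp add: hw iw sum.distrib sum_distrib_left sum_negf sum_subtractf algebra_simps)
qed

definition inner :: "nat \<Rightarrow> real \<Rightarrow> wd \<Rightarrow> nat \<Rightarrow> op" where
  "inner L U bw j = (\<lambda>T S. (\<Sum>s\<in>{Up, Dn}. -2 * ((wop (bw @ h1 L j s) T S - wop (h1 L j s @ bw) T S)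
      + (wop (bw @ h2 L j s) T S - wop (h2 L j s @ bw) T S)))
      + complex_of_real U * (wop (bw @ zz L j) T S - wop (zz L j @ bw) T S))"

lemma comm_b:
  assumes "0 < L" "T \<in> Pow (modes L)" "S \<in> Pow (modes L)" "inrange L bw"
  shows "opmul L (wop bw) (Hs L U) T S - opmul L (Hs L U) (wop bw) T S = (\<Sum>j<L. inner L U bw j T S)"
proof -
  note ow = opmul_wop[OF _ assms(2,3)]
  have a: "opmul L (wop bw) (Hs L U) T S = (\<Sum>j<L. (\<Sum>s\<in>{Up, Dn}. -2 * (wop (bw @ h1 L j s) T S + wop (bw @ h2 L j s) T S))
                        + complex_of_real U * wop (bw @ zz L j) T S)"
    unfolding Hs_def
    by (simp only: opmul_sum_right opmul_add_right opmul_scale_right ow[OF inrange_h1[OF assms(1)]]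
          ow[OF inrange_h2[OF assms(1)]] ow[OF inrange_zz[OF assms(1)]])
  have b: "opmul L (Hs L U) (wop bw) T S = (\<Sum>j<L. (\<Sum>s\<in>{Up, Dn}. -2 * (wop (h1 L j s @ bw) T S + wop (h2 L j s @ bw) T S))
                        + complex_of_real U * wop (zz L j @ bw) T S)"
    unfolding Hs_def
    by (simp only: opmul_sum_left opmul_add_left opmul_scale_left ow[OF assms(4)])
  show ?thesis unfolding a b inner_def
    by (simp add: sum_subtractf[symmetric] algebra_simps sum.distrib)
qed

lemma ip_inner1: "ip L X (inner L U bw j) = (\<Sum>s\<in>{Up, Dn}. -2 * (cm L X bw (h1 L j s) + cm L X bw (h2 L j s)))
                        + complex_of_real U * cm L X bw (zz L j)"
  unfolding inner_def cm_def
  by (simp only: ip_sum ip_add ip_scale ip_diff)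

lemma ip_inner: "(\<Sum>j<L. ip L X (inner L U bw j)) = Gam L U X bw"
  unfolding Gam_def ip_inner1 ..

lemma opmul_comm_sum:
  "opmul L (\<lambda>T S. \<Sum>x\<in>A. f x T S) B T S - opmul L B (\<lambda>T S. \<Sum>x\<in>A. f x T S) T S
   = (\<Sum>x\<in>A. opmul L (f x) B T S - opmul L B (f x) T S)"
  by (simp add: opmul_sum_left opmul_sum_right sum_subtractf)

lemma opmul_comm_scale:
  "opmul L (\<lambda>T S. a * A T S) B T S - opmul L B (\<lambda>T S. a * A T S) T S
   = a * (opmul L A B T S - opmul L B A T S)"
  by (simp add: opmul_scale_left opmul_scale_right algebra_simps)

lemma expand:
  assumes L: "0 < L" and cmt: "commutes L (local_sum L k c) (hubbard L U)"
  shows "(\<Sum>l\<in>{1..k}. \<Sum>j<L. \<Sum>es\<in>supp_elems l. c j es * Gam L U X (bword L j es)) = 0"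
proof -
  let ?F = "local_sum L k c"
  have pt: "opmul L ?F (hubbard L U) T S - opmul L (hubbard L U) ?F T S =
     (\<Sum>l\<in>{1..k}. \<Sum>j<L. \<Sum>es\<in>supp_elems l. c j es * (\<Sum>j'<L. inner L U (bword L j es) j' T S))"
    if TS: "T \<in> Pow (modes L)" "S \<in> Pow (modes L)" for T S
  proof -
    have h: "eqv L (hubbard L U) (Hs L U)" by (rule H_eqv[OF L])
    have r: "eqv L ?F ?F" by (simp add: eqv_def)
    have "opmul L ?F (hubbard L U) T S - opmul L (hubbard L U) ?F T S
        = opmul L ?F (Hs L U) T S - opmul L (Hs L U) ?F T S"
      using opmul_cong[OF r h TS] opmul_cong[OF h r TS] by simp
    also have "\<dots> = (\<Sum>l\<in>{1..k}. \<Sum>j<L. \<Sum>es\<in>supp_elems l. c j es *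
          (opmul L (basis_elem L j es) (Hs L U) T S - opmul L (Hs L U) (basis_elem L j es) T S))"
      unfolding local_sum_def by (simp add: opmul_comm_sum opmul_comm_scale)
    also have "\<dots> = (\<Sum>l\<in>{1..k}. \<Sum>j<L. \<Sum>es\<in>supp_elems l. c j es *
          (opmul L (wop (bword L j es)) (Hs L U) T S - opmul L (Hs L U) (wop (bword L j es)) T S))"
    proof -
      have "\<And>j es. opmul L (basis_elem L j es) (Hs L U) T S = opmul L (wop (bword L j es)) (Hs L U) T S"
           "\<And>j es. opmul L (Hs L U) (basis_elem L j es) T S = opmul L (Hs L U) (wop (bword L j es)) T S"
        using opmul_cong[OF basis_wop[OF L] _ TS] opmul_cong[OF _ basis_wop[OF L] TS]
        by (auto simp: eqv_def)
      then show ?thesis by simp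
    qed
    also have "\<dots> = (\<Sum>l\<in>{1..k}. \<Sum>j<L. \<Sum>es\<in>supp_elems l. c j es * (\<Sum>j'<L. inner L U (bword L j es) j' T S))"
      using comm_b[OF L TS inrange_bword[OF L]] by simp
    finally show ?thesis .
  qed
  have "0 = ip L X (\<lambda>T S. opmul L ?F (hubbard L U) T S - opmul L (hubbard L U) ?F T S)"
  proof -
    have "ip L X (\<lambda>T S. opmul L ?F (hubbard L U) T S - opmul L (hubbard L U) ?F T S) = ip L X (\<lambda>T S. 0)"
      by (rule ip_cong) (use cmt in \<open>auto simp: commutes_def\<close>)
    then show ?thesis by (simp add: ip_zero)
  qed
  also have "\<dots> = ip L X (\<lambda>T S. \<Sum>l\<in>{1..k}. \<Sum>j<L. \<Sum>es\<in>supp_elems l. c j es * (\<Sum>j'<L. inner L U (bword L j es) j' T S))"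
    by (rule ip_cong) (rule pt)
  also have "\<dots> = (\<Sum>l\<in>{1..k}. \<Sum>j<L. \<Sum>es\<in>supp_elems l. c j es * Gam L U X (bword L j es))"
    by (simp add: ip_sum ip_scale ip_inner)
  finally show ?thesis by simp
qed


fun sel :: "spin \<Rightarrow> loc \<times> loc \<Rightarrow> loc" where
  "sel Up x = fst x" | "sel Dn x = snd x"

definition sp :: "spin \<Rightarrow> nat" where "sp s = (case s of Up \<Rightarrow> 0 | Dn \<Rightarrow> 1)"

lemma mode_sp: "mode L j s = 2 * (j mod L) + sp s"
  by (simp add: mode_def sp_def)

lemma two_sp_eq: "2 * (x::nat) + sp s = 2 * y + sp s' \<longleftrightarrow> x = y \<and> s = s'"
  by (cases s; cases s'; simp add: sp_def; presburger)

lemma mode_eq: "mode L a s = mode L b s' \<longleftrightarrow> a mod L = b mod L \<and> s = s'"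
  unfolding mode_sp by (rule two_sp_eq)

lemma modeq_close:
  fixes x y L :: nat
  assumes "x mod L = y mod L" "x < y + L" "y < x + L"
  shows "x = y"
proof (cases "x \<le> y")
  case True
  then have "L dvd (y - x)" using assms(1) mod_eq_dvd_iff_nat[OF True, of L] by simp
  moreover have "y - x < L" using assms(2,3) True by linarith
  ultimately have "y - x = 0" by (metis dvd_imp_le neq0_conv not_less)
  then show ?thesis using True by simp
next
  case False
  then have "L dvd (x - y)" using assms(1) mod_eq_dvd_iff_nat[of y x L] False by auto
  moreover have "x - y < L" using assms(2,3) False by linarith
  ultimately have "x - y = 0" by (metis dvd_imp_le neq0_conv not_less)
  then show ?thesis using False by simp
qed

lemma opsat_filter: "opsat (filter nonI W) m = opsat W m"
  unfolding opsat_def nonI_def filter_filter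
  by (rule arg_cong[where f="map snd"], rule filter_cong) auto

lemma opsat_cword: "opsat (cword L j s xs) m =
   map (\<lambda>t. xs ! t) (filter (\<lambda>t. mode L (j + t) s = m \<and> xs ! t \<noteq> Im) [0..<length xs])"
  by (simp add: opsat_def cword_def filter_map comp_def)

lemma filter_single:
  assumes "\<And>t. t < l \<Longrightarrow> P t \<longleftrightarrow> t = t0 \<and> C" "t0 < l"
  shows "filter P [0..<l] = (if C then [t0] else [])"
proof -
  have "[0..<l] = [0..<t0] @ [t0..<l]" using upt_add_eq_append[of 0 t0 "l - t0"] assms(2) by simp
  moreover have "[t0..<l] = t0 # [Suc t0..<l]" using assms(2) by (simp add: upt_conv_Cons)
  ultimately have "[0..<l] = [0..<t0] @ t0 # [Suc t0..<l]" by simp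
  moreover have "filter P [0..<t0] = []" using assms by (auto simp: filter_empty_conv)
  moreover have "filter P [Suc t0..<l] = []" using assms by (auto simp: filter_empty_conv)
  ultimately show ?thesis using assms by auto
qed

lemma filter_none:
  assumes "\<And>t. t < l \<Longrightarrow> \<not> P t"
  shows "filter P [0..<l] = []"
  using assms by (auto simp: filter_empty_conv)

lemma site_inj:
  fixes j t1 t2 L :: nat
  assumes "(j + t1) mod L = (j + t2) mod L" "t1 < L" "t2 < L"
  shows "t1 = t2"
  using modeq_close[OF assms(1)] assms(2,3) by simp

lemma opsat_cword_at:
  assumes "t0 < length xs" "length xs \<le> L"
  shows "opsat (cword L j s xs) (mode L (j + t0) s0) = (if s = s0 \<and> xs ! t0 \<noteq> Im then [xs ! t0] else [])"
proof -
  have "filter (\<lambda>t. mode L (j + t) s = mode L (j + t0) s0 \<and> xs ! t \<noteq> Im) [0..<length xs]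
        = (if s = s0 \<and> xs ! t0 \<noteq> Im then [t0] else [])"
  proof (rule filter_single[OF _ assms(1)])
    fix t assume "t < length xs"
    then show "(mode L (j + t) s = mode L (j + t0) s0 \<and> xs ! t \<noteq> Im) = (t = t0 \<and> s = s0 \<and> xs ! t0 \<noteq> Im)"
      using site_inj[of j t L t0] assms by (auto simp: mode_eq)
  qed
  then show ?thesis unfolding opsat_cword by auto
qed

lemma opsat_cword_out:
  assumes "\<And>t. t < length xs \<Longrightarrow> m \<noteq> mode L (j + t) s"
  shows "opsat (cword L j s xs) m = []"
proof -
  have "filter (\<lambda>t. mode L (j + t) s = m \<and> xs ! t \<noteq> Im) [0..<length xs] = []"
    by (rule filter_none) (use assms in fastforce)
  then show ?thesis unfolding opsat_cword by simp
qed

lemma opsat_bword_at: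
  assumes "t0 < length es" "length es \<le> L"
  shows "opsat (bword L j es) (mode L (j + t0) s0) = (if sel s0 (es ! t0) \<noteq> Im then [sel s0 (es ! t0)] else [])"
  unfolding bword_def opsat_filter opsat_append
  using opsat_cword_at[of t0 "map fst es" L j Up s0] opsat_cword_at[of t0 "map snd es" L j Dn s0] assms
  by (cases s0) auto

lemma opsat_bword_out:
  assumes "\<And>t s. t < length es \<Longrightarrow> m \<noteq> mode L (j + t) s"
  shows "opsat (bword L j es) m = []"
  unfolding bword_def opsat_filter opsat_append
  using opsat_cword_out[of "map fst es" m L j Up] opsat_cword_out[of "map snd es" m L j Dn] assms
  by auto

lemma locw_bword_at:
  assumes "t0 < length es" "length es \<le> L"
  shows "locw (bword L j es) (mode L (j + t0) s0) = sel s0 (es ! t0)"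
  using opsat_bword_at[OF assms] by (auto simp: locw_def)

lemma locw_bword_nz:
  assumes "locw (bword L j es) m \<noteq> Im"
  shows "\<exists>t s. t < length es \<and> m = mode L (j + t) s"
proof (rule ccontr)
  assume "\<not> ?thesis"
  then have "opsat (bword L j es) m = []" by (intro opsat_bword_out) auto
  then show False using assms by (simp add: locw_def)
qed

lemma distinct_bword:
  assumes "length es \<le> L"
  shows "distinctw (bword L j es)"
  unfolding distinctw_def
proof
  fix m
  show "length (opsat (bword L j es) m) \<le> 1"
  proof (cases "\<exists>t s. t < length es \<and> m = mode L (j + t) s")
    case True
    then obtain t s where "t < length es" "m = mode L (j + t) s" by blast
    then show ?thesis using opsat_bword_at[OF _ assms] by simp
  next
    case False
    then have "opsat (bword L j es) m = []" by (intro opsat_bword_out) auto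
    then show ?thesis by simp
  qed
qed

lemma bword_nonIm: "p \<in> set (bword L j es) \<Longrightarrow> snd p \<noteq> Im"
  by (auto simp: bword_def nonI_def)


lemma move2:
  assumes "\<forall>v\<in>set R. fst v \<noteq> m1 \<and> fst v \<noteq> m2" "inrange L R" "m1 < 2 * L" "m2 < 2 * L"
  shows "rel L (msg e1 R * msg e2 R) ([(m1, e1), (m2, e2)] @ R) (R @ [(m1, e1), (m2, e2)])"
proof -
  have a: "rel L (msg e2 R) ((m1, e1) # (m2, e2) # R) ((m1, e1) # R @ [(m2, e2)])"
    using rel_ctx[OF move_rel[of R m2 L e2] msg_nz, where U="[(m1, e1)]" and V="[]"] assms by simp
  have b: "rel L (msg e1 R) ((m1, e1) # R @ [(m2, e2)]) (R @ [(m1, e1), (m2, e2)])"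
    using rel_ctx[OF move_rel[of R m1 L e1] msg_nz, where U="[]" and V="[(m2, e2)]"] assms by simp
  show ?thesis using rel_trans[OF a b] by (simp add: mult.commute)
qed

lemma msg_pair: "isodd e1 = isodd e2 \<Longrightarrow> msg e1 R * msg e2 R = 1"
  by (auto simp: msg_def simp flip: power_add)

lemma commute_cm:
  assumes "\<forall>v\<in>set bw. fst v \<noteq> m1 \<and> fst v \<noteq> m2" "inrange L bw" "m1 < 2 * L" "m2 < 2 * L"
    "isodd e1 = isodd e2"
  shows "cm L X bw [(m1, e1), (m2, e2)] = 0"
proof -
  have "rel L 1 ([(m1, e1), (m2, e2)] @ bw) (bw @ [(m1, e1), (m2, e2)])"
    using move2[OF assms(1-4), of e1 e2] msg_pair[OF assms(5)] by simp
  then show ?thesis using rel_ip[of L 1] by (simp add: cm_def)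
qed

lemma mv_end:
  assumes "distinctw (U @ [(x, e)] @ V)" "inrange L V" "x < 2 * L" "\<forall>p\<in>set V. snd p \<noteq> Im" "e \<noteq> Im"
  shows "rel L (msg e V) (U @ [(x, e)] @ V) (U @ V @ [(x, e)])"
proof -
  have "\<forall>v\<in>set V. fst v \<noteq> x"
  proof
    fix v assume v: "v \<in> set V"
    show "fst v \<noteq> x"
    proof
      assume "fst v = x"
      then have "snd v \<in> set (opsat V x)" using opsat_mem[OF v] assms(4) v by auto
      then have "length (opsat (U @ [(x, e)] @ V) x) \<ge> 2" using assms(5)
        by (cases "opsat V x") (auto simp: opsat_Cons)
      then show False using assms(1) by (simp add: distinctw_def) (metis not_less_eq_eq numeral_2_eq_2)
    qed
  qed
  then show ?thesis using rel_ctx[OF move_rel[of V x L e] msg_nz, where U=U and V="[]"] assms by simp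
qed

lemma mv_front:
  assumes "distinctw (U @ [(x, e)] @ V)" "inrange L U" "x < 2 * L" "\<forall>p\<in>set U. snd p \<noteq> Im" "e \<noteq> Im"
    "inrange L V"
  shows "rel L (msg e U) (U @ [(x, e)] @ V) ([(x, e)] @ U @ V)"
proof -
  have "\<forall>v\<in>set U. fst v \<noteq> x"
  proof
    fix v assume v: "v \<in> set U"
    show "fst v \<noteq> x"
    proof
      assume "fst v = x"
      then have "snd v \<in> set (opsat U x)" using opsat_mem[OF v] assms(4) v by auto
      then have "length (opsat (U @ [(x, e)] @ V) x) \<ge> 2" using assms(5)
        by (cases "opsat U x") (auto simp: opsat_Cons)
      then show False using assms(1) by (simp add: distinctw_def) (metis not_less_eq_eq numeral_2_eq_2)
    qed
  qed
  then have "rel L (msg e U) ((x, e) # U) (U @ [(x, e)])" using move_rel[of U x L e] assms by simp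
  then have "rel L (msg e U) (U @ [(x, e)]) ((x, e) # U)" by (rule rel_sym[OF _ msg_sq])
  from rel_ctx[OF this msg_nz assms(6), where U="[]"] show ?thesis by simp
qed

lemma distinct_other:
  assumes "distinctw (U @ [(x, e)] @ V)" "\<forall>p\<in>set (U @ V). snd p \<noteq> Im" "e \<noteq> Im"
  shows "\<forall>v\<in>set (U @ V). fst v \<noteq> x"
proof
  fix v assume v: "v \<in> set (U @ V)"
  show "fst v \<noteq> x"
  proof
    assume "fst v = x"
    then have "snd v \<in> set (opsat (U @ V) x)" using opsat_mem[OF v] assms(2) v by auto
    then have "length (opsat (U @ [(x, e)] @ V) x) \<ge> 2" using assms(3)
      by (cases "opsat U x"; cases "opsat V x") (auto simp: opsat_Cons)
    then show False using assms(1) by (simp add: distinctw_def) (metis not_less_eq_eq numeral_2_eq_2)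
  qed
qed

lemma ipr: "rel L a A B \<Longrightarrow> a \<noteq> 0 \<Longrightarrow> ip L X (wop A) = a * ip L X (wop B)"
  by (rule rel_ip)

lemma ctx_ip: "rel L a A B \<Longrightarrow> a \<noteq> 0 \<Longrightarrow> inrange L Wq \<Longrightarrow>
      ip L X (wop (Wp @ A @ Wq)) = a * ip L X (wop (Wp @ B @ Wq))"
  by (rule ipr[OF rel_ctx]) auto

lemma rtable:
  assumes bw: "bw = U @ [(x, e')] @ V" and d: "distinctw bw" and r: "inrange L bw"
    and nI: "\<forall>p\<in>set bw. snd p \<noteq> Im" and ny: "\<forall>p\<in>set bw. fst p \<noteq> y"
    and xy: "x \<noteq> y" "x < 2 * L" "y < 2 * L" and e: "e' \<noteq> Im"
  shows "cm L X bw [(x, Cd), (y, Cm)] =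
           (if e' = Zm then 2 * msg e' V * ip L X (wop (U @ V @ [(x, Cd), (y, Cm)]))
            else if e' = Cm then msg e' V * ip L X (wop (U @ V @ [(y, Cm)])) else 0)"
    and "cm L X bw [(y, Cd), (x, Cm)] =
           (if e' = Zm then - 2 * msg e' V * ip L X (wop (U @ V @ [(y, Cd), (x, Cm)]))
            else if e' = Cd then - msg e' V * ip L X (wop (U @ V @ [(y, Cd)])) else 0)"
proof -
  define R where "R = U @ V"
  define \<epsilon> where "\<epsilon> = msg e' V"
  have rR: "inrange L R" using r bw by (simp add: R_def)
  have rV: "inrange L V" using r bw by simp
  have nIR: "\<forall>p\<in>set R. snd p \<noteq> Im" using nI bw by (auto simp: R_def)
  have nx: "\<forall>v\<in>set R. fst v \<noteq> x"
    using distinct_other[of U x e' V] d bw nIR e by (simp add: R_def)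
  have nyR: "\<forall>v\<in>set R. fst v \<noteq> y" using ny bw by (auto simp: R_def)
  have A: "rel L \<epsilon> bw (R @ [(x, e')])"
    using mv_end[of U x e' V L] d bw rV xy nI e by (simp add: R_def \<epsilon>_def)
  have en: "\<epsilon> \<noteq> 0" by (simp add: \<epsilon>_def msg_nz)
  have mv2: "rel L 1 ([(a1, b1), (a2, b2)] @ R) (R @ [(a1, b1), (a2, b2)])"
    if "a1 \<in> {x, y}" "a2 \<in> {x, y}" "isodd b1 = isodd b2" for a1 a2 b1 b2
    using move2[of R a1 a2 L b1 b2] msg_pair[OF that(3)] that nx nyR rR xy by auto
  have rl: "\<And>a A B Wp Wq. rel L a A B \<Longrightarrow> a \<noteq> 0 \<Longrightarrow> inrange L Wq \<Longrightarrow>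
      ip L X (wop (Wp @ A @ Wq)) = a * ip L X (wop (Wp @ B @ Wq))"
    by (rule ipr[OF rel_ctx]) auto
  have b1: "ip L X (wop (bw @ [(x, Cd), (y, Cm)])) = \<epsilon> * ip L X (wop (R @ [(x, e'), (x, Cd), (y, Cm)]))"
    using ctx_ip[where Wp="[]" and Wq="[(x, Cd), (y, Cm)]", OF A en] xy by simp
  have b2: "ip L X (wop ([(x, Cd), (y, Cm)] @ bw)) = \<epsilon> * swsg Cm e' * ip L X (wop (R @ [(x, Cd), (x, e'), (y, Cm)]))"
  proof -
    have "ip L X (wop ([(x, Cd), (y, Cm)] @ bw)) = \<epsilon> * ip L X (wop ([(x, Cd), (y, Cm)] @ R @ [(x, e')]))"
      using ctx_ip[where Wp="[(x, Cd), (y, Cm)]" and Wq="[]", OF A en] by simp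
    also have "ip L X (wop ([(x, Cd), (y, Cm)] @ R @ [(x, e')])) = ip L X (wop (R @ [(x, Cd), (y, Cm), (x, e')]))"
      using ctx_ip[where Wp="[]" and Wq="[(x, e')]", OF mv2[of x y Cd Cm] _ _] xy by simp
    also have "ip L X (wop (R @ [(x, Cd), (y, Cm), (x, e')])) = swsg Cm e' * ip L X (wop (R @ [(x, Cd), (x, e'), (y, Cm)]))"
      using ctx_ip[where Wp="R @ [(x, Cd)]" and Wq="[]", OF swap_rel[of y x L Cm e'] swsg_nz] xy by simp
    finally show ?thesis by simp
  qed
  show "cm L X bw [(x, Cd), (y, Cm)] =
           (if e' = Zm then 2 * msg e' V * ip L X (wop (U @ V @ [(x, Cd), (y, Cm)]))
            else if e' = Cm then msg e' V * ip L X (wop (U @ V @ [(y, Cm)])) else 0)"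
  proof (cases e')
    case Zm
    have "ip L X (wop (R @ [(x, Zm), (x, Cd)] @ [(y, Cm)])) = ip L X (wop (R @ [(x, Cd)] @ [(y, Cm)]))"
      using ctx_ip[where Wp="R" and Wq="[(y, Cm)]", OF rel_zcd] xy by simp
    moreover have "ip L X (wop (R @ [(x, Cd), (x, Zm)] @ [(y, Cm)])) = - ip L X (wop (R @ [(x, Cd)] @ [(y, Cm)]))"
      using ctx_ip[where Wp="R" and Wq="[(y, Cm)]", OF rel_cdz] xy by simp
    ultimately show ?thesis using b1 b2 Zm by (simp add: cm_def R_def \<epsilon>_def swsg_def)
  next
    case Cm
    have "ip L X (wop (R @ [(x, Cm), (x, Cd)] @ [(y, Cm)])) + ip L X (wop (R @ [(x, Cd), (x, Cm)] @ [(y, Cm)]))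
          = ip L X (wop (R @ [(y, Cm)]))"
      using car_ip[of L "[(y, Cm)]" X R x] xy by simp
    moreover have "cm L X bw [(x, Cd), (y, Cm)] = \<epsilon> * (ip L X (wop (R @ [(x, Cm), (x, Cd)] @ [(y, Cm)])) + ip L X (wop (R @ [(x, Cd), (x, Cm)] @ [(y, Cm)])))"
      using b1 b2 Cm by (simp add: cm_def swsg_def algebra_simps)
    ultimately show ?thesis using Cm by (simp add: R_def \<epsilon>_def)
  next
    case Cd
    have "ip L X (wop (R @ [(x, Cd), (x, Cd)] @ [(y, Cm)])) = 0"
      by (rule zero_word_ip) (use xy in auto)
    then show ?thesis using b1 b2 Cd by (simp add: cm_def)
  qed (use e in simp)
  have c1: "ip L X (wop (bw @ [(y, Cd), (x, Cm)])) = \<epsilon> * swsg e' Cd * ip L X (wop (R @ [(y, Cd), (x, e'), (x, Cm)]))"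
  proof -
    have "ip L X (wop (bw @ [(y, Cd), (x, Cm)])) = \<epsilon> * ip L X (wop (R @ [(x, e'), (y, Cd), (x, Cm)]))"
      using ctx_ip[where Wp="[]" and Wq="[(y, Cd), (x, Cm)]", OF A en] xy by simp
    also have "ip L X (wop (R @ [(x, e'), (y, Cd), (x, Cm)])) = swsg e' Cd * ip L X (wop (R @ [(y, Cd), (x, e'), (x, Cm)]))"
      using ctx_ip[where Wp="R" and Wq="[(x, Cm)]", OF swap_rel[of x y L e' Cd] swsg_nz] xy by simp
    finally show ?thesis by simp
  qed
  have c2: "ip L X (wop ([(y, Cd), (x, Cm)] @ bw)) = \<epsilon> * ip L X (wop (R @ [(y, Cd), (x, Cm), (x, e')]))"
  proof -
    have "ip L X (wop ([(y, Cd), (x, Cm)] @ bw)) = \<epsilon> * ip L X (wop ([(y, Cd), (x, Cm)] @ R @ [(x, e')]))"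
      using ctx_ip[where Wp="[(y, Cd), (x, Cm)]" and Wq="[]", OF A en] by simp
    also have "ip L X (wop ([(y, Cd), (x, Cm)] @ R @ [(x, e')])) = ip L X (wop (R @ [(y, Cd), (x, Cm), (x, e')]))"
      using ctx_ip[where Wp="[]" and Wq="[(x, e')]", OF mv2[of y x Cd Cm] _ _] xy by simp
    finally show ?thesis by simp
  qed
  show "cm L X bw [(y, Cd), (x, Cm)] =
           (if e' = Zm then - 2 * msg e' V * ip L X (wop (U @ V @ [(y, Cd), (x, Cm)]))
            else if e' = Cd then - msg e' V * ip L X (wop (U @ V @ [(y, Cd)])) else 0)"
  proof (cases e')
    case Zm
    have "ip L X (wop ((R @ [(y, Cd)]) @ [(x, Zm), (x, Cm)] @ [])) = - ip L X (wop ((R @ [(y, Cd)]) @ [(x, Cm)] @ []))"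
      using ctx_ip[where Wp="R @ [(y, Cd)]" and Wq="[]", OF rel_zc] by simp
    moreover have "ip L X (wop ((R @ [(y, Cd)]) @ [(x, Cm), (x, Zm)] @ [])) = ip L X (wop ((R @ [(y, Cd)]) @ [(x, Cm)] @ []))"
      using ctx_ip[where Wp="R @ [(y, Cd)]" and Wq="[]", OF rel_cz] by simp
    ultimately show ?thesis using c1 c2 Zm by (simp add: cm_def R_def \<epsilon>_def swsg_def)
  next
    case Cd
    have "ip L X (wop ((R @ [(y, Cd)]) @ [(x, Cm), (x, Cd)] @ [])) + ip L X (wop ((R @ [(y, Cd)]) @ [(x, Cd), (x, Cm)] @ []))
          = ip L X (wop ((R @ [(y, Cd)]) @ []))"
      by (rule car_ip) simp
    moreover have "cm L X bw [(y, Cd), (x, Cm)] = - \<epsilon> * (ip L X (wop ((R @ [(y, Cd)]) @ [(x, Cm), (x, Cd)] @ [])) + ip L X (wop ((R @ [(y, Cd)]) @ [(x, Cd), (x, Cm)] @ [])))"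
      using c1 c2 Cd by (simp add: cm_def swsg_def algebra_simps)
    ultimately show ?thesis using Cd by (simp add: R_def \<epsilon>_def)
  next
    case Cm
    have "ip L X (wop ((R @ [(y, Cd)]) @ [(x, Cm), (x, Cm)] @ [])) = 0"
      by (rule zero_word_ip) auto
    then show ?thesis using c1 c2 Cm by (simp add: cm_def)
  qed (use e in simp)
qed

lemma ltable:
  assumes bw: "bw = U @ [(nu, g)] @ V" and d: "distinctw bw" and r: "inrange L bw"
    and nI: "\<forall>p\<in>set bw. snd p \<noteq> Im" and nmu: "\<forall>p\<in>set bw. fst p \<noteq> mu"
    and xy: "mu \<noteq> nu" "mu < 2 * L" "nu < 2 * L" and g: "g = Cm \<or> g = Cd"
    and Q: "distinctw Q" "inrange L Q" "locw Q nu \<noteq> Im"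
  shows "cm L (wop Q) bw [(mu, Cd), (nu, Cm)] = 0" and "cm L (wop Q) bw [(nu, Cd), (mu, Cm)] = 0"
proof -
  define R where "R = U @ V"
  define \<epsilon> where "\<epsilon> = msg g U"
  have rR: "inrange L R" using r bw by (simp add: R_def)
  have rU: "inrange L U" "inrange L V" using r bw by simp_all
  have nIR: "\<forall>p\<in>set R. snd p \<noteq> Im" using nI bw by (auto simp: R_def)
  have gI: "g \<noteq> Im" using g by auto
  have nx: "\<forall>v\<in>set R. fst v \<noteq> nu"
    using distinct_other[of U nu g V] d bw nIR gI by (simp add: R_def)
  have nyR: "\<forall>v\<in>set R. fst v \<noteq> mu" using nmu bw by (auto simp: R_def)
  have A: "rel L \<epsilon> bw ([(nu, g)] @ R)"
    using mv_front[of U nu g V L] d bw rU xy nI gI by (simp add: R_def \<epsilon>_def)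
  have en: "\<epsilon> \<noteq> 0" by (simp add: \<epsilon>_def msg_nz)
  have mv2: "rel L 1 (R @ [(a1, b1), (a2, b2)]) ([(a1, b1), (a2, b2)] @ R)"
    if "a1 \<in> {mu, nu}" "a2 \<in> {mu, nu}" "isodd b1 = isodd b2" for a1 a2 b1 b2
  proof -
    have "rel L 1 ([(a1, b1), (a2, b2)] @ R) (R @ [(a1, b1), (a2, b2)])"
      using move2[of R a1 a2 L b1 b2] msg_pair[OF that(3)] that nx nyR rR xy by auto
    then show ?thesis by (rule rel_sym) simp
  qed
  have gc: "ip L (wop Q) (wop ([(mu, p)] @ R)) = 0" for p
  proof (rule GC[OF Q(2) _ Q(1), of _ nu])
    show "inrange L ([(mu, p)] @ R)" using rR xy by simp
    have "opsat ([(mu, p)] @ R) nu = []" using nx xy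
      by (auto simp: opsat_def filter_empty_conv)
    then show "length (opsat ([(mu, p)] @ R) nu) \<le> 1" "locw ([(mu, p)] @ R) nu \<noteq> locw Q nu"
      using Q(3) by (auto simp: locw_def)
  qed
  let ?X = "wop Q"
  have b1: "ip L ?X (wop (bw @ [(mu, Cd), (nu, Cm)])) = \<epsilon> * swsg g Cd * ip L ?X (wop ([(mu, Cd), (nu, g), (nu, Cm)] @ R))"
  proof -
    have "ip L ?X (wop (bw @ [(mu, Cd), (nu, Cm)])) = \<epsilon> * ip L ?X (wop ([(nu, g)] @ R @ [(mu, Cd), (nu, Cm)]))"
      using ctx_ip[where Wp="[]" and Wq="[(mu, Cd), (nu, Cm)]", OF A en] xy by simp
    also have "ip L ?X (wop ([(nu, g)] @ R @ [(mu, Cd), (nu, Cm)])) = ip L ?X (wop ([(nu, g)] @ [(mu, Cd), (nu, Cm)] @ R))"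
      using ctx_ip[where Wp="[(nu, g)]" and Wq="[]", OF mv2[of mu nu Cd Cm]] by simp
    also have "ip L ?X (wop ([(nu, g)] @ [(mu, Cd), (nu, Cm)] @ R)) = swsg g Cd * ip L ?X (wop ([(mu, Cd), (nu, g), (nu, Cm)] @ R))"
      using ctx_ip[where Wp="[]" and Wq="(nu, Cm) # R", OF swap_rel[of nu mu L g Cd] swsg_nz] xy rR by simp
    finally show ?thesis by simp
  qed
  have b2: "ip L ?X (wop ([(mu, Cd), (nu, Cm)] @ bw)) = \<epsilon> * ip L ?X (wop ([(mu, Cd), (nu, Cm), (nu, g)] @ R))"
    using ctx_ip[where Wp="[(mu, Cd), (nu, Cm)]" and Wq="[]", OF A en] by simp
  show "cm L (wop Q) bw [(mu, Cd), (nu, Cm)] = 0"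
  proof (cases "g = Cm")
    case True
    have "ip L ?X (wop ([(mu, Cd)] @ [(nu, Cm), (nu, Cm)] @ R)) = 0"
      by (rule zero_word_ip) (use rR in auto)
    then show ?thesis using b1 b2 True by (simp add: cm_def)
  next
    case False
    then have gd: "g = Cd" using g by simp
    have "ip L ?X (wop ([(mu, Cd)] @ [(nu, Cm), (nu, Cd)] @ R)) + ip L ?X (wop ([(mu, Cd)] @ [(nu, Cd), (nu, Cm)] @ R))
          = ip L ?X (wop ([(mu, Cd)] @ R))"
      by (rule car_ip[OF rR])
    moreover have "cm L (wop Q) bw [(mu, Cd), (nu, Cm)] = - \<epsilon> * (ip L ?X (wop ([(mu, Cd)] @ [(nu, Cm), (nu, Cd)] @ R)) + ip L ?X (wop ([(mu, Cd)] @ [(nu, Cd), (nu, Cm)] @ R)))"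
      using b1 b2 gd by (simp add: cm_def swsg_def algebra_simps)
    ultimately show ?thesis using gc[of Cd] by simp
  qed
  have c1: "ip L ?X (wop (bw @ [(nu, Cd), (mu, Cm)])) = \<epsilon> * ip L ?X (wop ([(nu, g), (nu, Cd), (mu, Cm)] @ R))"
  proof -
    have "ip L ?X (wop (bw @ [(nu, Cd), (mu, Cm)])) = \<epsilon> * ip L ?X (wop ([(nu, g)] @ R @ [(nu, Cd), (mu, Cm)]))"
      using ctx_ip[where Wp="[]" and Wq="[(nu, Cd), (mu, Cm)]", OF A en] xy by simp
    also have "ip L ?X (wop ([(nu, g)] @ R @ [(nu, Cd), (mu, Cm)])) = ip L ?X (wop ([(nu, g)] @ [(nu, Cd), (mu, Cm)] @ R))"
      using ctx_ip[where Wp="[(nu, g)]" and Wq="[]", OF mv2[of nu mu Cd Cm]] by simp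
    finally show ?thesis by simp
  qed
  have c2: "ip L ?X (wop ([(nu, Cd), (mu, Cm)] @ bw)) = \<epsilon> * swsg Cm g * ip L ?X (wop ([(nu, Cd), (nu, g), (mu, Cm)] @ R))"
  proof -
    have "ip L ?X (wop ([(nu, Cd), (mu, Cm)] @ bw)) = \<epsilon> * ip L ?X (wop ([(nu, Cd), (mu, Cm), (nu, g)] @ R))"
      using ctx_ip[where Wp="[(nu, Cd), (mu, Cm)]" and Wq="[]", OF A en] by simp
    also have "ip L ?X (wop ([(nu, Cd), (mu, Cm), (nu, g)] @ R)) = swsg Cm g * ip L ?X (wop ([(nu, Cd), (nu, g), (mu, Cm)] @ R))"
      using ctx_ip[where Wp="[(nu, Cd)]" and Wq="R", OF swap_rel[of mu nu L Cm g] swsg_nz] xy rR by simp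
    finally show ?thesis by simp
  qed
  show "cm L (wop Q) bw [(nu, Cd), (mu, Cm)] = 0"
  proof (cases "g = Cd")
    case True
    have "ip L ?X (wop ([] @ [(nu, Cd), (nu, Cd)] @ (mu, Cm) # R)) = 0"
      by (rule zero_word_ip) (use rR xy in auto)
    then show ?thesis using c1 c2 True by (simp add: cm_def)
  next
    case False
    then have gm: "g = Cm" using g by simp
    have "ip L ?X (wop ([] @ [(nu, Cm), (nu, Cd)] @ (mu, Cm) # R)) + ip L ?X (wop ([] @ [(nu, Cd), (nu, Cm)] @ (mu, Cm) # R))
          = ip L ?X (wop ([] @ (mu, Cm) # R))"
      by (rule car_ip) (use rR xy in simp)
    moreover have "cm L (wop Q) bw [(nu, Cd), (mu, Cm)] = \<epsilon> * (ip L ?X (wop ([] @ [(nu, Cm), (nu, Cd)] @ (mu, Cm) # R)) + ip L ?X (wop ([] @ [(nu, Cd), (nu, Cm)] @ (mu, Cm) # R)))"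
      using c1 c2 gm by (simp add: cm_def swsg_def algebra_simps)
    ultimately show ?thesis using gc[of Cm] by simp
  qed
qed


lemma mod_cancel:
  fixes a b c L :: nat
  assumes "(a + c) mod L = (b + c) mod L"
  shows "a mod L = b mod L"
proof (cases "a \<le> b")
  case True
  then have "L dvd (b + c - (a + c))" using assms mod_eq_dvd_iff_nat[of "a + c" "b + c" L] by simp
  then have "L dvd (b - a)" by simp
  then show ?thesis using mod_eq_dvd_iff_nat[OF True, of L] by simp
next
  case False
  then have "b \<le> a" by simp
  then have "L dvd (a + c - (b + c))" using assms mod_eq_dvd_iff_nat[of "b + c" "a + c" L] by simp
  then have "L dvd (a - b)" by simp
  then show ?thesis using mod_eq_dvd_iff_nat[OF \<open>b \<le> a\<close>, of L] by simp
qed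

lemma mod_addc:
  fixes a b c L :: nat
  assumes "a mod L = b mod L"
  shows "(a + c) mod L = (b + c) mod L"
  by (metis assms mod_add_left_eq)

lemma arcA1:
  fixes i j d1 d2 t1 t2 k L :: nat
  assumes "(j + t1) mod L = (i + d1) mod L" "(j + t2) mod L = (i + d2) mod L"
    "t1 < k" "t2 < k" "d1 + k \<le> d2" "d2 + k \<le> d1 + L"
  shows False
proof -
  have "(j + t1 + t2) mod L = (i + d1 + t2) mod L" using mod_addc[OF assms(1), of t2] by simp
  moreover have "(j + t2 + t1) mod L = (i + d2 + t1) mod L" using mod_addc[OF assms(2), of t1] by simp
  ultimately have "(i + d1 + t2) mod L = (i + d2 + t1) mod L" by (simp add: add.commute add.left_commute)
  then have "i + d1 + t2 = i + d2 + t1" by (rule modeq_close) (use assms in linarith)+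
  then show False using assms by linarith
qed

lemma arcA2:
  fixes i j w dj tw k L :: nat
  assumes "j mod L = (i + w + dj) mod L" "(j + tw) mod L = (i + w) mod L" "dj < k" "tw < k"
    "2 * k \<le> L" "j < L"
  shows "j = (i + w) mod L"
proof -
  have "(j + tw) mod L = (i + w + dj + tw) mod L" using mod_addc[OF assms(1), of tw] by simp
  then have "(i + w + dj + tw) mod L = (i + w) mod L" using assms(2) by simp
  then have "i + w + dj + tw = i + w" by (rule modeq_close) (use assms in linarith)+
  then have "dj = 0" by simp
  then show ?thesis using assms(1,6) by simp
qed

lemma site_ne:
  fixes i a b L :: nat
  assumes "a < b" "b < a + L"
  shows "(i + a) mod L \<noteq> (i + b) mod L"
proof
  assume "(i + a) mod L = (i + b) mod L"
  then have "i + a = i + b" by (rule modeq_close) (use assms in linarith)+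
  then show False using assms by simp
qed

lemma CL_hop:
  fixes aO ab :: "nat \<Rightarrow> loc"
  assumes Lk: "2 * k + 2 \<le> L" "3 \<le> k" "i < L" "j < L" "l \<le> k" "j' < L"
    and O1: "aO (mode L (i + k) \<sigma>) \<noteq> Im"
    and O2: "\<And>m. aO m \<noteq> Im \<Longrightarrow> \<exists>d s. d \<le> k \<and> m = mode L (i + d) s"
    and O2': "\<And>s. aO (mode L (i + k) s) \<noteq> Im \<Longrightarrow> s = \<sigma>"
    and O4: "aO (mode L i s0) \<noteq> Im"
    and B1: "\<And>m. ab m \<noteq> Im \<Longrightarrow> \<exists>t s. t < l \<and> m = mode L (j + t) s"
    and Bj: "ab (mode L j sj) \<noteq> Im"
    and ag: "\<And>m. m \<noteq> mode L j' s' \<Longrightarrow> m \<noteq> mode L (j' + 1) s' \<Longrightarrow> ab m = aO m"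
        "ab (mode L j' s') = Im \<Longrightarrow> aO (mode L j' s') = e1"
    and tc: "ab (mode L j' s') \<noteq> Im \<or> ab (mode L (j' + 1) s') \<noteq> Im"
  shows "(j' = (i + k - 1) mod L \<and> s' = \<sigma> \<and> j = i \<and> ab (mode L (i + k) \<sigma>) = Im
            \<and> ab (mode L (i + k - 1) \<sigma>) \<noteq> Im) \<or>
         (j' = i \<and> s' = s0 \<and> aO (mode L i s0) = e1 \<and> (\<forall>s. s \<noteq> s0 \<longrightarrow> aO (mode L i s) = Im)
            \<and> j = Suc i mod L \<and> l = k \<and> ab (mode L i s0) = Im \<and> ab (mode L (Suc i) s0) \<noteq> Im)"
proof -
  define tch where "tch n \<longleftrightarrow> (\<exists>t<l. (j + t) mod L = n mod L)" for n
  have tchI: "tch n" if tn: "ab (mode L n s) \<noteq> Im" for n s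
  proof -
    obtain t s2 where "t < l" "mode L n s = mode L (j + t) s2" using B1[OF tn] by blast
    then show ?thesis unfolding tch_def by (auto simp: mode_eq)
  qed
  have A1: False if "tch (i + d1)" "tch (i + d2)" "d1 + k \<le> d2" "d2 + k \<le> d1 + L" for d1 d2
  proof -
    note th = that
    obtain t1 t2 where "t1 < l" "t2 < l" "(j + t1) mod L = (i + d1) mod L" "(j + t2) mod L = (i + d2) mod L"
      using th(1,2) unfolding tch_def by blast
    then show False using arcA1[of j t1 L i d1 t2 d2 k] th(3,4) Lk(5) by linarith
  qed
  have A2: "j = (i + w) mod L" if win: "\<And>m. ab m \<noteq> Im \<Longrightarrow> \<exists>d s. d < k \<and> m = mode L (i + w + d) s"
    and tw: "tch (i + w)" for w
  proof -
    obtain dj s where dj: "dj < k" "mode L j sj = mode L (i + w + dj) s" using win[OF Bj] by blast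
    obtain t where t: "t < l" "(j + t) mod L = (i + w) mod L" using tw unfolding tch_def by blast
    show ?thesis using arcA2[of j L i w dj t k] dj t Lk by (auto simp: mode_eq)
  qed
  have Lpos: "k < L" "1 < L" using Lk by linarith+
  define y where "y = mode L (i + k) \<sigma>"
  define m1 where "m1 = mode L j' s'"
  define m2 where "m2 = mode L (j' + 1) s'"
  define mu where "mu = mode L i s0"
  have tchi_ni: "\<not> tch (i + k)" if "tch i" using A1[of 0 k] that Lk by auto
  show ?thesis
  proof (cases "y = m2")
    case True
    then have yj: "(i + k) mod L = (j' + 1) mod L" "s' = \<sigma>" by (auto simp: y_def m2_def mode_eq)
    have j'eq: "j' mod L = (i + k - 1) mod L"
      using mod_cancel[of j' 1 L "i + k - 1"] yj Lk by simp
    have "mu \<noteq> m1"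
    proof
      assume "mu = m1"
      then have "i mod L = j' mod L" by (auto simp: mu_def m1_def mode_eq)
      then have "(i + (k - 1)) mod L = i mod L" using j'eq Lk by simp
      moreover have "k - 1 < L" "0 < k - 1" using Lk by linarith+
      ultimately show False using site_ne[of 0 "k - 1" L i] Lk by simp
    qed
    moreover have "mu \<noteq> m2"
    proof
      assume "mu = m2"
      then have "i mod L = (i + k) mod L" using yj by (auto simp: mu_def m2_def mode_eq)
      then show False using site_ne[of 0 k L i] Lpos Lk by simp
    qed
    ultimately have "ab mu \<noteq> Im" using ag(1) O4 by (simp add: mu_def m1_def m2_def)
    then have ti: "tch i" using tchI by (auto simp: mu_def)
    have aby: "ab y = Im" using tchI[of "i + k" \<sigma>] tchi_ni[OF ti] by (auto simp: y_def)
    then have abm1: "ab m1 \<noteq> Im" using tc True by (simp add: m1_def m2_def)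
    have m1x: "m1 = mode L (i + k - 1) \<sigma>" using j'eq yj by (simp add: m1_def mode_eq)
    have "j = (i + 0) mod L"
    proof (rule A2)
      fix m assume abm: "ab m \<noteq> Im"
      show "\<exists>d s. d < k \<and> m = mode L (i + 0 + d) s"
      proof (cases "m = m1")
        case True then show ?thesis using m1x Lk by (intro exI[of _ "k - 1"] exI[of _ \<sigma>]) simp
      next
        case False
        have "m \<noteq> m2" using abm aby True by auto
        then have "aO m \<noteq> Im" using ag(1) abm False by (simp add: m1_def m2_def)
        then obtain d s where ds: "d \<le> k" "m = mode L (i + d) s" using O2 by blast
        have "d \<noteq> k"
        proof
          assume "d = k"
          then have "s = \<sigma>" using O2' \<open>aO m \<noteq> Im\<close> ds by simp
          then show False using \<open>d = k\<close> ds \<open>m \<noteq> m2\<close> True by (simp add: y_def)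
        qed
        then show ?thesis using ds by (intro exI[of _ d] exI[of _ s]) simp
      qed
    next
      show "tch (i + 0)" using ti by simp
    qed
    then have "j = i" using Lk by simp
    moreover have "j' = (i + k - 1) mod L" using j'eq Lk by simp
    ultimately show ?thesis using yj aby abm1 m1x by (simp add: y_def)
  next
    case ny2: False
    show ?thesis
    proof (cases "y = m1")
      case True
      then have yj: "(i + k) mod L = j' mod L" "s' = \<sigma>" by (auto simp: y_def m1_def mode_eq)
      have j1: "(j' + 1) mod L = (i + (k + 1)) mod L" using mod_addc[OF yj(1)[symmetric], of 1] by simp
      have "mu \<noteq> m1"
      proof
        assume "mu = m1"
        then have "i mod L = (i + k) mod L" using yj by (auto simp: mu_def m1_def mode_eq)
        then show False using site_ne[of 0 k L i] Lpos Lk by simp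
      qed
      moreover have "mu \<noteq> m2"
      proof
        assume "mu = m2"
        then have "(i + 0) mod L = (i + (k + 1)) mod L" using j1 by (auto simp: mu_def m2_def mode_eq)
        then show False using site_ne[of 0 "k + 1" L i] Lk by simp
      qed
      ultimately have "ab mu \<noteq> Im" using ag(1) O4 by (simp add: mu_def m1_def m2_def)
      then have ti: "tch (i + 0)" using tchI by (auto simp: mu_def)
      show ?thesis
      proof (cases "ab m1 \<noteq> Im")
        case True
        then have "tch j'" using tchI by (auto simp: m1_def)
        then have "tch (i + k)" using yj unfolding tch_def by simp
        then show ?thesis using A1[OF ti, of k] Lk by simp
      next
        case False
        then have "ab m2 \<noteq> Im" using tc by (simp add: m1_def m2_def)
        then have "tch (j' + 1)" using tchI by (auto simp: m2_def)
        then have "tch (i + (k + 1))" using j1 unfolding tch_def by simp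
        then show ?thesis using A1[OF ti, of "k + 1"] Lk by auto
      qed
    next
      case ny1: False
      have "ab y = aO y" using ag(1) ny1 ny2 by (simp add: m1_def m2_def)
      then have "tch (i + k)" using O1 tchI[of "i + k" \<sigma>] by (simp add: y_def)
      then have nti: "\<not> tch (i + 0)" using A1[of 0 k] Lk by auto
      have abi: "ab (mode L i s) = Im" for s using tchI[of i s] nti by auto
      have mu12: "mu = m1 \<or> mu = m2"
      proof (rule ccontr)
        assume "\<not> ?thesis"
        then have "ab mu = aO mu" using ag(1) by (simp add: m1_def m2_def)
        then show False using abi O4 by (simp add: mu_def)
      qed
      show ?thesis
      proof (cases "mu = m1")
        case True
        then have "i mod L = j' mod L" "s' = s0" by (auto simp: mu_def m1_def mode_eq)
        then have j'i: "j' = i" using Lk by simp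
        have abm1: "ab m1 = Im" using abi j'i by (simp add: m1_def)
        have aO1: "aO mu = e1" using ag(2) abm1 True by (simp add: m1_def mu_def)
        have abm2: "ab m2 \<noteq> Im" using tc abm1 by (simp add: m1_def m2_def)
        have m2e: "m2 = mode L (Suc i) s0" using j'i \<open>s' = s0\<close> by (simp add: m2_def)
        have oth: "aO (mode L i s) = Im" if "s \<noteq> s0" for s
        proof -
          have "mode L i s \<noteq> m1" using that j'i \<open>s' = s0\<close> by (simp add: m1_def mode_eq)
          moreover have "mode L i s \<noteq> m2"
          proof
            assume "mode L i s = m2"
            then have "(i + 0) mod L = (i + 1) mod L" using m2e by (simp add: mode_eq)
            then show False using site_ne[of 0 1 L i] Lpos by simp
          qed
          ultimately show ?thesis using ag(1) abi by (metis m1_def m2_def)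
        qed
        have t1: "tch (i + 1)" using tchI abm2 m2e by auto
        have jj: "j = (i + 1) mod L"
        proof (rule A2)
          fix m assume abm: "ab m \<noteq> Im"
          show "\<exists>d s. d < k \<and> m = mode L (i + 1 + d) s"
          proof (cases "m = m2")
            case True then show ?thesis using m2e Lk by (intro exI[of _ 0] exI[of _ s0]) simp
          next
            case False
            have "m \<noteq> m1" using abm abm1 by auto
            then have "aO m \<noteq> Im" using ag(1) abm False by (simp add: m1_def m2_def)
            then obtain d s where ds: "d \<le> k" "m = mode L (i + d) s" using O2 by blast
            have "d \<noteq> 0"
            proof
              assume "d = 0"
              then show False using ds abm abi[of s] by simp
            qed
            then show ?thesis using ds by (intro exI[of _ "d - 1"] exI[of _ s]) auto
          qed
        next
          show "tch (i + 1)" by (rule t1)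
        qed
        have lk: "l = k"
        proof -
          obtain t where t: "t < l" "(j + t) mod L = (i + k) mod L" using \<open>tch (i + k)\<close> unfolding tch_def by blast
          have "(i + 1 + t) mod L = (i + k) mod L" using t(2) jj mod_addc[of j L "i + 1" t] by simp
          then have "i + 1 + t = i + k" by (rule modeq_close) (use t Lk in linarith)+
          then show ?thesis using t Lk by linarith
        qed
        show ?thesis using j'i \<open>s' = s0\<close> aO1 oth jj lk abi abm2 m2e
          by (simp add: mu_def)
      next
        case False
        then have "mu = m2" using mu12 by simp
        then have im: "i mod L = (j' + 1) mod L" "s' = s0" by (auto simp: mu_def m2_def mode_eq)
        have abm2: "ab m2 = Im" using abi[of s0] \<open>mu = m2\<close> by (simp add: mu_def)
        then have "ab m1 \<noteq> Im" using tc by (simp add: m1_def m2_def)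
        then have tj: "tch j'" using tchI by (auto simp: m1_def)
        have "(j' + 1) mod L = (i + (L - 1) + 1) mod L" using im Lk by simp
        then have "j' mod L = (i + (L - 1)) mod L" by (rule mod_cancel)
        then have "tch (i + (L - 1))" using tj unfolding tch_def by simp
        moreover have "k + k \<le> L - 1" "L - 1 + k \<le> k + L" using Lk by linarith+
        ultimately have False using A1[OF \<open>tch (i + k)\<close>, of "L - 1"] by blast
        then show ?thesis ..
      qed
    qed
  qed
qed

lemma CL_zz:
  fixes aO ab :: "nat \<Rightarrow> loc"
  assumes Lk: "2 * k + 2 \<le> L" "3 \<le> k" "i < L" "l \<le> k" "j' < L"
    and O1: "aO (mode L (i + k) \<sigma>) \<noteq> Im" "aO (mode L (i + k) \<sigma>) \<noteq> Zm"
    and O4: "aO (mode L i s0) \<noteq> Im"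
    and B1: "\<And>m. ab m \<noteq> Im \<Longrightarrow> \<exists>t s. t < l \<and> m = mode L (j + t) s"
    and ag: "\<And>m. m \<noteq> mode L j' Up \<Longrightarrow> m \<noteq> mode L j' Dn \<Longrightarrow> ab m = aO m"
        "\<And>s. ab (mode L j' s) = Im \<Longrightarrow> aO (mode L j' s) = Zm"
    and tc: "ab (mode L j' Up) \<noteq> Im \<or> ab (mode L j' Dn) \<noteq> Im"
  shows False
proof -
  define tch where "tch n \<longleftrightarrow> (\<exists>t<l. (j + t) mod L = n mod L)" for n
  have tchI: "tch n" if tn: "ab (mode L n s) \<noteq> Im" for n s
  proof -
    obtain t s2 where "t < l" "mode L n s = mode L (j + t) s2" using B1[OF tn] by blast
    then show ?thesis unfolding tch_def by (auto simp: mode_eq)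
  qed
  have A1: False if "tch (i + d1)" "tch (i + d2)" "d1 + k \<le> d2" "d2 + k \<le> d1 + L" for d1 d2
  proof -
    note th = that
    obtain t1 t2 where "t1 < l" "t2 < l" "(j + t1) mod L = (i + d1) mod L" "(j + t2) mod L = (i + d2) mod L"
      using th(1,2) unfolding tch_def by blast
    then show False using arcA1[of j t1 L i d1 t2 d2 k] th(3,4) Lk(4) by linarith
  qed
  have Lpos: "k < L" using Lk by linarith
  have mj: "m = mode L j' Up \<or> m = mode L j' Dn" if "m = mode L j' s" for m s
    using that by (cases s) auto
  show False
  proof (cases "mode L (i + k) \<sigma> = mode L j' Up \<or> mode L (i + k) \<sigma> = mode L j' Dn")
    case True
    then have jk: "(i + k) mod L = j' mod L" by (auto simp: mode_eq)
    have "ab (mode L (i + k) \<sigma>) \<noteq> Im"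
    proof
      assume "ab (mode L (i + k) \<sigma>) = Im"
      moreover have me: "mode L (i + k) \<sigma> = mode L j' \<sigma>" using jk by (simp add: mode_eq)
      ultimately have "aO (mode L (i + k) \<sigma>) = Zm" using ag(2)[of \<sigma>] by simp
      then show False using O1 by simp
    qed
    then have tk: "tch (i + k)" using tchI by blast
    have "mode L i s0 \<noteq> mode L j' s" for s
    proof
      assume "mode L i s0 = mode L j' s"
      then have "(i + 0) mod L = (i + k) mod L" using jk by (simp add: mode_eq)
      then show False using site_ne[of 0 k L i] Lk Lpos by simp
    qed
    then have "ab (mode L i s0) = aO (mode L i s0)" using ag(1) by metis
    then have "tch (i + 0)" using O4 tchI[of i s0] by simp
    then show False using A1[OF _ tk, of 0] Lk by simp
  next
    case False
    then have "ab (mode L (i + k) \<sigma>) = aO (mode L (i + k) \<sigma>)" using ag(1) by simp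
    then have tk: "tch (i + k)" using O1 tchI[of "i + k" \<sigma>] by simp
    have nti: "\<not> tch (i + 0)" using A1[OF _ tk, of 0] Lk by auto
    have "mode L i s0 = mode L j' Up \<or> mode L i s0 = mode L j' Dn"
    proof (rule ccontr)
      assume "\<not> ?thesis"
      then have "ab (mode L i s0) = aO (mode L i s0)" using ag(1) by simp
      then show False using O4 tchI[of i s0] nti by simp
    qed
    then have "i mod L = j' mod L" by (auto simp: mode_eq)
    moreover obtain s where "ab (mode L j' s) \<noteq> Im" using tc by blast
    then have "tch j'" using tchI by blast
    ultimately have "tch (i + 0)" unfolding tch_def by simp
    then show False using nti by simp
  qed
qed


lemma locw_Im_iff: "locw W m = Im \<longleftrightarrow> opsat W m = []"
proof -
  have "Im \<notin> set (opsat W m)" by (auto simp: opsat_def)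
  then show ?thesis by (cases "opsat W m") (auto simp: locw_def)
qed

lemma opsat_pair: "opsat [(m1, e1), (m2, e2)] m =
   (if m = m1 \<and> e1 \<noteq> Im then [e1] else []) @ (if m = m2 \<and> e2 \<noteq> Im then [e2] else [])"
  by (simp add: opsat_def)

lemma agree_word:
  assumes Q: "inrange L Q" "distinctw Q" and B: "inrange L bw" "distinctw bw"
    and t: "m1 \<noteq> m2" "e1 \<noteq> Im" "e2 \<noteq> Im" "m1 < 2 * L" "m2 < 2 * L"
    and W: "W = bw @ [(m1, e1), (m2, e2)] \<or> W = [(m1, e1), (m2, e2)] @ bw"
    and nz: "ip L (wop Q) (wop W) \<noteq> 0"
  shows "\<And>m. m \<noteq> m1 \<Longrightarrow> m \<noteq> m2 \<Longrightarrow> locw bw m = locw Q m"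
    and "locw bw m1 = Im \<Longrightarrow> locw Q m1 = e1"
    and "locw bw m2 = Im \<Longrightarrow> locw Q m2 = e2"
proof -
  have rW: "inrange L W" using W B t by auto
  have os: "opsat W m = opsat bw m @ opsat [(m1, e1), (m2, e2)] m \<or>
            opsat W m = opsat [(m1, e1), (m2, e2)] m @ opsat bw m" for m
    using W by (metis opsat_append)
  have lb: "length (opsat bw m) \<le> 1" for m using B by (simp add: distinctw_def)
  have key: "locw W m = locw Q m" if "length (opsat W m) \<le> 1" for m
    using GC[OF Q(1) rW Q(2) that] nz by auto
  show "locw bw m = locw Q m" if "m \<noteq> m1" "m \<noteq> m2" for m
  proof -
    have "opsat W m = opsat bw m" using os[of m] that by (simp add: opsat_pair)
    then show ?thesis using key[of m] lb[of m] by (simp add: locw_def)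
  qed
  show "locw Q m1 = e1" if "locw bw m1 = Im"
  proof -
    have "opsat bw m1 = []" using that locw_Im_iff by blast
    then have "opsat W m1 = [e1]" using os[of m1] t by (simp add: opsat_pair)
    then show ?thesis using key[of m1] by (simp add: locw_def)
  qed
  show "locw Q m2 = e2" if "locw bw m2 = Im"
  proof -
    have "opsat bw m2 = []" using that locw_Im_iff by blast
    then have "opsat W m2 = [e2]" using os[of m2] t by (simp add: opsat_pair)
    then show ?thesis using key[of m2] by (simp add: locw_def)
  qed
qed

lemma agree_cm:
  assumes Q: "inrange L Q" "distinctw Q" and B: "inrange L bw" "distinctw bw"
    and t: "m1 \<noteq> m2" "e1 \<noteq> Im" "e2 \<noteq> Im" "m1 < 2 * L" "m2 < 2 * L"
    and nz: "cm L (wop Q) bw [(m1, e1), (m2, e2)] \<noteq> 0"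
  shows "\<And>m. m \<noteq> m1 \<Longrightarrow> m \<noteq> m2 \<Longrightarrow> locw bw m = locw Q m"
    and "locw bw m1 = Im \<Longrightarrow> locw Q m1 = e1"
    and "locw bw m2 = Im \<Longrightarrow> locw Q m2 = e2"
proof -
  obtain W where W: "W = bw @ [(m1, e1), (m2, e2)] \<or> W = [(m1, e1), (m2, e2)] @ bw"
    and nzW: "ip L (wop Q) (wop W) \<noteq> 0"
    using nz unfolding cm_def by (metis diff_self)
  note a = agree_word[OF Q B t W nzW]
  show "\<And>m. m \<noteq> m1 \<Longrightarrow> m \<noteq> m2 \<Longrightarrow> locw bw m = locw Q m" by (rule a(1))
  show "locw bw m1 = Im \<Longrightarrow> locw Q m1 = e1" by (rule a(2))
  show "locw bw m2 = Im \<Longrightarrow> locw Q m2 = e2" by (rule a(3))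
qed

lemma touch_cm:
  assumes B: "inrange L bw" "\<forall>p\<in>set bw. snd p \<noteq> Im" and t: "m1 < 2 * L" "m2 < 2 * L" "isodd e1 = isodd e2"
    and nz: "cm L X bw [(m1, e1), (m2, e2)] \<noteq> 0"
  shows "locw bw m1 \<noteq> Im \<or> locw bw m2 \<noteq> Im"
proof (rule ccontr)
  assume "\<not> ?thesis"
  then have "opsat bw m1 = []" "opsat bw m2 = []" using locw_Im_iff by auto
  then have "\<forall>v\<in>set bw. fst v \<noteq> m1 \<and> fst v \<noteq> m2" using B(2)
    by (auto simp: opsat_def filter_empty_conv)
  then show False using commute_cm[OF _ B(1) t] nz by blast
qed


definition resw :: "loc \<Rightarrow> nat \<Rightarrow> nat \<Rightarrow> wd" where
  "resw e x y = (if e = Zm then [(x, Cd), (y, Cm)] else if e = Cm then [(y, Cm)] else [(y, Cd)])"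

lemma locw_append: "locw (A @ B) m = (if opsat A m = [] then locw B m else locw A m)"
  by (cases "opsat A m") (auto simp: locw_def)

lemma supp_len: "es \<in> supp_elems l \<Longrightarrow> length es = l"
  by (simp add: supp_elems_def)

lemma nonIm_bword: "\<forall>p\<in>set (bword L j es). snd p \<noteq> Im"
  using bword_nonIm by blast

lemma notin_from_locw: "locw W m = Im \<Longrightarrow> \<forall>p\<in>set W. snd p \<noteq> Im \<Longrightarrow> \<forall>p\<in>set W. fst p \<noteq> m"
  using locw_Im_iff[of W m] by (auto simp: opsat_def filter_empty_conv)

lemma locw_append2: "opsat B m = [] \<Longrightarrow> locw (A @ B) m = locw A m"
  by (cases "opsat A m") (auto simp: locw_def)

locale rset =
  fixes L k i :: nat and q :: "(loc \<times> loc) list" and \<sigma> :: spin and U V :: wd and e :: loc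
  assumes Lk: "2 * k + 2 \<le> L" "3 \<le> k" "i < L" and q: "q \<in> supp_elems k"
    and e: "e = sel \<sigma> (q ! (k - 1))" "e \<noteq> Im"
    and sp: "bword L i q = U @ (mode L (i + (k - 1)) \<sigma>, e) # V"
begin

abbreviation "xx \<equiv> mode L (i + (k - 1)) \<sigma>"
abbreviation "yy \<equiv> mode L (i + k) \<sigma>"
abbreviation "Ow \<equiv> U @ V @ resw e xx yy"

lemma lenq: "length q = k" using q by (simp add: supp_elems_def)

lemma Lpos: "0 < L" using Lk by linarith

lemma bq_dist: "distinctw (bword L i q)" using distinct_bword lenq Lk by simp
lemma bq_range: "inrange L (bword L i q)" using inrange_bword Lpos by simp
lemma bq_at: "t < k \<Longrightarrow> locw (bword L i q) (mode L (i + t) s) = sel s (q ! t)"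
  using locw_bword_at[of t q L i s] lenq Lk by simp
lemma bq_nz: "locw (bword L i q) m \<noteq> Im \<Longrightarrow> \<exists>t s. t < k \<and> m = mode L (i + t) s"
  using locw_bword_nz lenq by metis

lemma xy_ne: "xx \<noteq> yy"
  using site_ne[of "k - 1" k L i] Lk by (simp add: mode_eq)

lemma xy_range: "xx < 2 * L" "yy < 2 * L" using mode_lt Lpos by auto

lemma bq_y: "locw (bword L i q) yy = Im"
proof (rule ccontr)
  assume "locw (bword L i q) yy \<noteq> Im"
  then obtain t s where t: "t < k" "yy = mode L (i + t) s" using bq_nz by blast
  then have "(i + t) mod L = (i + k) mod L" by (simp add: mode_eq)
  then show False using site_ne[of t k L i] t Lk by simp
qed

lemma bq_noty: "\<forall>p\<in>set (bword L i q). fst p \<noteq> yy"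
  using notin_from_locw[OF bq_y nonIm_bword] .

lemma UV_nox: "\<forall>p\<in>set (U @ V). fst p \<noteq> xx"
  using distinct_other[of U xx e V] bq_dist sp nonIm_bword[of L i q] e(2) by auto

lemma UV_noy: "\<forall>p\<in>set (U @ V). fst p \<noteq> yy"
  using bq_noty sp by auto

lemma opsat_UV: "opsat (U @ V) m = (if m = xx then [] else opsat (bword L i q) m)"
proof (cases "m = xx")
  case True
  then show ?thesis using UV_nox by (auto simp: opsat_def filter_empty_conv)
qed (simp add: sp opsat_Cons)

lemma locw_UV: "locw (U @ V) m = (if m = xx then Im else locw (bword L i q) m)"
  using opsat_UV by (simp add: locw_def)

lemma locw_Ow: "locw Ow m = (if m = xx then (if e = Zm then Cd else Im)
                             else if m = yy then (if e = Cd then Cd else Cm) else locw (bword L i q) m)"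
proof -
  have eq: "locw Ow m = (if opsat (U @ V) m = [] then locw (resw e xx yy) m else locw (U @ V) m)"
    using locw_append[of "U @ V" "resw e xx yy" m] by simp
  show ?thesis
  proof (cases "m = xx")
    case True
    then show ?thesis using eq opsat_UV[of m] xy_ne by (auto simp: resw_def locw_def opsat_def)
  next
    case nx: False
    show ?thesis
    proof (cases "m = yy")
      case True
      then have "opsat (U @ V) m = []" using opsat_UV[of m] nx bq_y locw_Im_iff by simp
      then show ?thesis using eq True nx xy_ne e(2) by (cases e) (auto simp: resw_def locw_def opsat_def)
    next
      case False
      then have "opsat (resw e xx yy) m = []" using nx by (auto simp: resw_def opsat_def)
      then have "locw Ow m = locw (U @ V) m" using locw_append2[of "resw e xx yy" m "U @ V"] by simp
      then show ?thesis using locw_UV[of m] nx False by simp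
    qed
  qed
qed

lemma Ow_range: "inrange L Ow"
  using bq_range sp xy_range by (auto simp: resw_def)

lemma Ow_dist: "distinctw Ow"
  unfolding distinctw_def
proof
  fix m
  have "length (opsat (U @ V) m) \<le> 1" using opsat_UV[of m] bq_dist by (simp add: distinctw_def)
  moreover have "opsat (resw e xx yy) m = [] \<or> opsat (U @ V) m = []"
    using opsat_UV[of m] bq_y locw_Im_iff[of "bword L i q" yy] xy_ne
    by (auto simp: resw_def opsat_def)
  moreover have "length (opsat (resw e xx yy) m) \<le> 1" using xy_ne by (auto simp: resw_def opsat_def)
  ultimately show "length (opsat Ow m) \<le> 1" by auto
qed

lemma O1: "locw Ow yy \<noteq> Im" "locw Ow yy \<noteq> Zm"
  using locw_Ow[of yy] xy_ne by auto

lemma O2: "locw Ow m \<noteq> Im \<Longrightarrow> \<exists>d s. d \<le> k \<and> m = mode L (i + d) s"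
proof -
  assume a: "locw Ow m \<noteq> Im"
  show ?thesis
  proof (cases "m = xx \<or> m = yy")
    case True then show ?thesis by (metis diff_le_self order_refl)
  next
    case False
    then have "locw (bword L i q) m \<noteq> Im" using a locw_Ow[of m] by simp
    then show ?thesis using bq_nz by (meson less_imp_le_nat)
  qed
qed

lemma O2': "locw Ow (mode L (i + k) s) \<noteq> Im \<Longrightarrow> s = \<sigma>"
proof (rule ccontr)
  assume a: "locw Ow (mode L (i + k) s) \<noteq> Im" "s \<noteq> \<sigma>"
  have "k < k - 1 + L" "k - 1 < k" using Lk by linarith+
  then have "(i + (k - 1)) mod L \<noteq> (i + k) mod L" using site_ne[of "k - 1" k L i] by blast
  then have "mode L (i + k) s \<noteq> xx" by (simp add: mode_eq)
  moreover have "mode L (i + k) s \<noteq> yy" using a(2) by (simp add: mode_eq)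
  ultimately have "locw (bword L i q) (mode L (i + k) s) \<noteq> Im" using a locw_Ow by simp
  then obtain t s' where t: "t < k" "mode L (i + k) s = mode L (i + t) s'" using bq_nz by blast
  then have "(i + t) mod L = (i + k) mod L" by (simp add: mode_eq)
  then show False using site_ne[of t k L i] t Lk by simp
qed

lemma O3: "t < k \<Longrightarrow> mode L (i + t) s \<noteq> xx \<Longrightarrow> locw Ow (mode L (i + t) s) = sel s (q ! t)"
proof -
  assume t: "t < k" "mode L (i + t) s \<noteq> xx"
  have "mode L (i + t) s \<noteq> yy" using site_ne[of t k L i] t Lk by (simp add: mode_eq)
  then show ?thesis using t locw_Ow bq_at by simp
qed

lemma site0_ne: "mode L (i + 0) s \<noteq> xx" "mode L (i + 1) s \<noteq> xx"
  using site_ne[of 0 "k - 1" L i] site_ne[of 1 "k - 1" L i] Lk by (auto simp: mode_eq)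

end


context rset
begin

definition Rtype :: "nat \<Rightarrow> wd \<Rightarrow> bool" where
  "Rtype j bw \<longleftrightarrow> j = i \<and> locw bw yy = Im \<and> locw bw xx \<noteq> Im \<and>
      (\<forall>m. m \<noteq> xx \<longrightarrow> m \<noteq> yy \<longrightarrow> locw bw m = locw Ow m)"

definition Ltype :: "spin \<Rightarrow> nat \<Rightarrow> nat \<Rightarrow> wd \<Rightarrow> bool" where
  "Ltype s0 l j bw \<longleftrightarrow> isodd (locw Ow (mode L i s0)) \<and> (\<forall>s. s \<noteq> s0 \<longrightarrow> locw Ow (mode L i s) = Im)
      \<and> j = Suc i mod L \<and> l = k \<and> locw bw (mode L i s0) = Im \<and> locw bw (mode L (Suc i) s0) \<noteq> Im
      \<and> (\<forall>m. m \<noteq> mode L i s0 \<longrightarrow> m \<noteq> mode L (Suc i) s0 \<longrightarrow> locw bw m = locw Ow m)"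

lemma xx_alt: "mode L (i + k - 1) \<sigma> = xx"
proof -
  have "i + k - 1 = i + (k - 1)" using Lk by linarith
  then show ?thesis by simp
qed

lemma mode_modL: "mode L (n mod L) s = mode L n s"
  by (simp add: mode_eq)

lemma mode_modL1: "mode L (n mod L + 1) s = mode L (n + 1) s"
  unfolding mode_eq using mod_add_left_eq[of n L 1] by simp

lemma ik1: "i + k - 1 + 1 = i + k" using Lk by linarith

lemma TL_hop:
  assumes b: "l \<in> {1..k}" "j < L" "es \<in> supp_elems l" and jL: "j' < L"
    and s0: "locw Ow (mode L i s0) \<noteq> Im"
    and t: "t = h1 L j' s' \<or> t = h2 L j' s'"
    and nz: "cm L (wop Ow) (bword L j es) t \<noteq> 0"
  shows "(j' = (i + k - 1) mod L \<and> s' = \<sigma> \<and> Rtype j (bword L j es)) \<or>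
         (j' = i \<and> s' = s0 \<and> Ltype s0 l j (bword L j es))"
proof -
  let ?bw = "bword L j es"
  let ?ab = "locw ?bw"
  let ?aO = "locw Ow"
  have len: "length es = l" using b supp_len by blast
  have lk: "l \<le> k" "1 \<le> l" using b by auto
  have bd: "distinctw ?bw" using distinct_bword[of es L j] len lk Lk by simp
  have br: "inrange L ?bw" using inrange_bword Lpos by simp
  have bn: "\<forall>p\<in>set ?bw. snd p \<noteq> Im" by (rule nonIm_bword)
  have B1: "\<And>m. ?ab m \<noteq> Im \<Longrightarrow> \<exists>t s. t < l \<and> m = mode L (j + t) s"
    using locw_bword_nz len by metis
  obtain sj where Bj: "?ab (mode L j sj) \<noteq> Im"
  proof -
    have "es \<noteq> []" using len lk by auto
    then have "es ! 0 \<noteq> (Im, Im)" using b(3) by (auto simp: supp_elems_def hd_conv_nth)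
    then obtain sj where "sel sj (es ! 0) \<noteq> Im" by (metis prod.collapse sel.simps)
    moreover have "?ab (mode L j sj) = sel sj (es ! 0)"
      using locw_bword_at[of 0 es L j sj] len lk Lk by simp
    ultimately show ?thesis using that[of sj] by simp
  qed
  have m12: "mode L j' s' \<noteq> mode L (j' + 1) s'"
    using site_ne[of 0 1 L j'] Lk by (simp add: mode_eq)
  have mr: "mode L j' s' < 2 * L" "mode L (j' + 1) s' < 2 * L" using mode_lt Lpos by auto
  have ag: "\<And>m. m \<noteq> mode L j' s' \<Longrightarrow> m \<noteq> mode L (j' + 1) s' \<Longrightarrow> ?ab m = ?aO m"
       "?ab (mode L j' s') = Im \<Longrightarrow> ?aO (mode L j' s') = (if t = h1 L j' s' then Cd else Cm)"
       and tc: "?ab (mode L j' s') \<noteq> Im \<or> ?ab (mode L (j' + 1) s') \<noteq> Im"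
  proof -
    show "\<And>m. m \<noteq> mode L j' s' \<Longrightarrow> m \<noteq> mode L (j' + 1) s' \<Longrightarrow> ?ab m = ?aO m"
         "?ab (mode L j' s') = Im \<Longrightarrow> ?aO (mode L j' s') = (if t = h1 L j' s' then Cd else Cm)"
    proof -
      fix m
      consider (a) "t = h1 L j' s'" | (b) "t \<noteq> h1 L j' s'" "t = h2 L j' s'" using t by blast
      then have "(m \<noteq> mode L j' s' \<longrightarrow> m \<noteq> mode L (j' + 1) s' \<longrightarrow> ?ab m = ?aO m) \<and>
                 (?ab (mode L j' s') = Im \<longrightarrow> ?aO (mode L j' s') = (if t = h1 L j' s' then Cd else Cm))"
      proof cases
        case a
        note A = agree_cm[OF Ow_range Ow_dist br bd m12 _ _ mr, of Cd Cm] nz a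
        show ?thesis using A by (auto simp: h1_def)
      next
        case b
        note A = agree_cm[OF Ow_range Ow_dist br bd m12[symmetric] _ _ mr(2,1), of Cd Cm] nz b
        show ?thesis using A by (auto simp: h2_def)
      qed
      then show "m \<noteq> mode L j' s' \<Longrightarrow> m \<noteq> mode L (j' + 1) s' \<Longrightarrow> ?ab m = ?aO m"
                "?ab (mode L j' s') = Im \<Longrightarrow> ?aO (mode L j' s') = (if t = h1 L j' s' then Cd else Cm)"
        by auto
    qed
    show "?ab (mode L j' s') \<noteq> Im \<or> ?ab (mode L (j' + 1) s') \<noteq> Im"
      using t
    proof
      assume "t = h1 L j' s'"
      then show ?thesis using touch_cm[OF br bn mr, of Cd Cm] nz by (simp add: h1_def)
    next
      assume "t = h2 L j' s'"
      then show ?thesis using touch_cm[OF br bn mr(2,1), of Cd Cm] nz by (auto simp: h2_def)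
    qed
  qed
  have O2x: "\<And>m. ?aO m \<noteq> Im \<Longrightarrow> \<exists>d s. d \<le> k \<and> m = mode L (i + d) s" using O2 by blast
  note CL = CL_hop[OF _ _ Lk(3) b(2) lk(1) jL O1(1) O2x O2' s0 B1 Bj ag tc]
  have CLr: "(j' = (i + k - 1) mod L \<and> s' = \<sigma> \<and> j = i \<and> ?ab yy = Im \<and> ?ab xx \<noteq> Im) \<or>
         (j' = i \<and> s' = s0 \<and> ?aO (mode L i s0) = (if t = h1 L j' s' then Cd else Cm) \<and> (\<forall>s. s \<noteq> s0 \<longrightarrow> ?aO (mode L i s) = Im)
            \<and> j = Suc i mod L \<and> l = k \<and> ?ab (mode L i s0) = Im \<and> ?ab (mode L (Suc i) s0) \<noteq> Im)"
    using CL Lk xx_alt by simp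
  then show ?thesis
  proof
    assume r: "j' = (i + k - 1) mod L \<and> s' = \<sigma> \<and> j = i \<and> ?ab yy = Im \<and> ?ab xx \<noteq> Im"
    then have "mode L j' s' = xx" "mode L (j' + 1) s' = yy"
      using xx_alt mode_modL mode_modL1 ik1 by auto
    then have "Rtype j ?bw" using r ag(1) by (auto simp: Rtype_def)
    then show ?thesis using r by simp
  next
    assume r: "j' = i \<and> s' = s0 \<and> ?aO (mode L i s0) = (if t = h1 L j' s' then Cd else Cm) \<and> (\<forall>s. s \<noteq> s0 \<longrightarrow> ?aO (mode L i s) = Im)
            \<and> j = Suc i mod L \<and> l = k \<and> ?ab (mode L i s0) = Im \<and> ?ab (mode L (Suc i) s0) \<noteq> Im"
    then have "isodd (?aO (mode L i s0))" by auto
    then have "Ltype s0 l j ?bw" using r ag(1) by (auto simp: Ltype_def)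
    then show ?thesis using r by simp
  qed
qed

lemma TL_zz:
  assumes b: "l \<in> {1..k}" "j < L" "es \<in> supp_elems l" and jL: "j' < L"
    and s0: "locw Ow (mode L i s0) \<noteq> Im"
  shows "cm L (wop Ow) (bword L j es) (zz L j') = 0"
proof (rule ccontr)
  assume nz: "cm L (wop Ow) (bword L j es) (zz L j') \<noteq> 0"
  let ?bw = "bword L j es"
  let ?ab = "locw ?bw"
  let ?aO = "locw Ow"
  have len: "length es = l" using b supp_len by blast
  have lk: "l \<le> k" using b by auto
  have bd: "distinctw ?bw" using distinct_bword[of es L j] len lk Lk by simp
  have br: "inrange L ?bw" using inrange_bword Lpos by simp
  have bn: "\<forall>p\<in>set ?bw. snd p \<noteq> Im" by (rule nonIm_bword)
  have B1: "\<And>m. ?ab m \<noteq> Im \<Longrightarrow> \<exists>t s. t < l \<and> m = mode L (j + t) s"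
    using locw_bword_nz len by metis
  have m12: "mode L j' Up \<noteq> mode L j' Dn" by (simp add: mode_eq)
  have mr: "mode L j' Up < 2 * L" "mode L j' Dn < 2 * L" using mode_lt Lpos by auto
  note A = agree_cm[OF Ow_range Ow_dist br bd m12 _ _ mr, of Zm Zm] nz
  have ag1: "\<And>m. m \<noteq> mode L j' Up \<Longrightarrow> m \<noteq> mode L j' Dn \<Longrightarrow> ?ab m = ?aO m"
    using A by (simp add: zz_def)
  have ag2: "\<And>s. ?ab (mode L j' s) = Im \<Longrightarrow> ?aO (mode L j' s) = Zm"
  proof -
    fix s show "?ab (mode L j' s) = Im \<Longrightarrow> ?aO (mode L j' s) = Zm"
      using A by (cases s) (simp_all add: zz_def)
  qed
  have tc: "?ab (mode L j' Up) \<noteq> Im \<or> ?ab (mode L j' Dn) \<noteq> Im"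
    using touch_cm[OF br bn mr, of Zm Zm] nz by (simp add: zz_def)
  show False using CL_zz[OF Lk(1,2,3) lk jL O1 s0 B1 ag1 ag2 tc] .
qed

end


lemma sum_single2:
  fixes L p :: nat
  assumes "p < L" "\<And>j' s. j' < L \<Longrightarrow> (j' \<noteq> p \<or> s \<noteq> \<tau>) \<Longrightarrow> F j' s = (0::complex)"
  shows "(\<Sum>j'<L. \<Sum>s\<in>{Up, Dn}. F j' s) = F p \<tau>"
proof -
  have "(\<Sum>s\<in>{Up, Dn}. F j' s) = (if j' = p then F p \<tau> else 0)" if "j' < L" for j'
  proof -
    have "(\<Sum>s\<in>{Up, Dn}. F j' s) = F j' Up + F j' Dn" by simp
    then show ?thesis using assms(2)[OF that] by (cases \<tau>) auto
  qed
  then have "(\<Sum>j'<L. \<Sum>s\<in>{Up, Dn}. F j' s) = (\<Sum>j'<L. if j' = p then F p \<tau> else 0)"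
    by (intro sum.cong) auto
  also have "\<dots> = F p \<tau>" using assms(1) by (subst sum.delta) auto
  finally show ?thesis .
qed

definition single :: "loc \<times> loc \<Rightarrow> bool" where
  "single p \<longleftrightarrow> (isodd (fst p) \<and> snd p = Im) \<or> (fst p = Im \<and> isodd (snd p))"

lemma finite_supp: "finite (supp_elems l)"
proof -
  have "supp_elems l \<subseteq> {es. set es \<subseteq> all_locs \<and> length es = l}" by (auto simp: supp_elems_def)
  moreover have "finite {es. set es \<subseteq> all_locs \<and> length es = l}"
    by (rule finite_lists_length_eq) (simp add: all_locs_def)
  ultimately show ?thesis by (rule finite_subset)
qed

context rset
begin

definition FF :: "wd \<Rightarrow> nat \<Rightarrow> spin \<Rightarrow> complex" where
  "FF bw j' s = -2 * (cm L (wop Ow) bw (h1 L j' s) + cm L (wop Ow) bw (h2 L j' s))"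

lemma Gam_FF:
  assumes b: "l \<in> {1..k}" "j < L" "es \<in> supp_elems l" and s0: "locw Ow (mode L i s0) \<noteq> Im"
  shows "Gam L Uc (wop Ow) (bword L j es) = (\<Sum>j'<L. \<Sum>s\<in>{Up, Dn}. FF (bword L j es) j' s)"
  unfolding Gam_def FF_def using TL_zz[OF b _ s0] by simp

lemma Lne: "Suc i mod L \<noteq> i"
proof
  assume "Suc i mod L = i"
  then have "(i + 1) mod L = (i + 0) mod L" using Lk by simp
  then show False using site_ne[of 0 1 L i] Lk by simp
qed

lemma GR:
  assumes b: "l \<in> {1..k}" "j < L" "es \<in> supp_elems l" and s0: "locw Ow (mode L i s0) \<noteq> Im"
    and R: "Rtype j (bword L j es)"
  shows "Gam L Uc (wop Ow) (bword L j es) = FF (bword L j es) ((i + k - 1) mod L) \<sigma>"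
  unfolding Gam_FF[OF b s0]
proof (rule sum_single2)
  show "(i + k - 1) mod L < L" using Lpos by simp
  fix j' s assume jL: "j' < L" and ne: "j' \<noteq> (i + k - 1) mod L \<or> s \<noteq> \<sigma>"
  have "cm L (wop Ow) (bword L j es) t = 0" if "t = h1 L j' s \<or> t = h2 L j' s" for t
  proof (rule ccontr)
    assume "cm L (wop Ow) (bword L j es) t \<noteq> 0"
    from TL_hop[OF b jL s0 that this] show False
      using ne R Lne by (auto simp: Rtype_def Ltype_def)
  qed
  then show "FF (bword L j es) j' s = 0" by (simp add: FF_def)
qed

lemma GL:
  assumes b: "l \<in> {1..k}" "j < L" "es \<in> supp_elems l" and s0: "locw Ow (mode L i s0) \<noteq> Im"
    and Lt: "Ltype s0 l j (bword L j es)"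
  shows "Gam L Uc (wop Ow) (bword L j es) = FF (bword L j es) i s0"
  unfolding Gam_FF[OF b s0]
proof (rule sum_single2)
  show "i < L" using Lk by simp
  fix j' s assume jL: "j' < L" and ne: "j' \<noteq> i \<or> s \<noteq> s0"
  have "cm L (wop Ow) (bword L j es) t = 0" if "t = h1 L j' s \<or> t = h2 L j' s" for t
  proof (rule ccontr)
    assume "cm L (wop Ow) (bword L j es) t \<noteq> 0"
    from TL_hop[OF b jL s0 that this] show False
      using ne Lt Lne by (auto simp: Rtype_def Ltype_def)
  qed
  then show "FF (bword L j es) j' s = 0" by (simp add: FF_def)
qed

lemma G0:
  assumes b: "l \<in> {1..k}" "j < L" "es \<in> supp_elems l" and s0: "locw Ow (mode L i s0) \<noteq> Im"
    and nR: "\<not> Rtype j (bword L j es)" and nL: "\<not> Ltype s0 l j (bword L j es)"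
  shows "Gam L Uc (wop Ow) (bword L j es) = 0"
proof -
  have "FF (bword L j es) j' s = 0" if jL: "j' < L" for j' s
  proof -
    have "cm L (wop Ow) (bword L j es) t = 0" if "t = h1 L j' s \<or> t = h2 L j' s" for t
    proof (rule ccontr)
      assume "cm L (wop Ow) (bword L j es) t \<noteq> 0"
      from TL_hop[OF b jL s0 that this] show False using nR nL by auto
    qed
    then show ?thesis by (simp add: FF_def)
  qed
  then show ?thesis unfolding Gam_FF[OF b s0] by simp
qed

lemma h1_aa: "h1 L ((i + k - 1) mod L) \<sigma> = [(xx, Cd), (yy, Cm)]"
  unfolding h1_def using xx_alt mode_modL mode_modL1 ik1 by simp

lemma h2_aa: "h2 L ((i + k - 1) mod L) \<sigma> = [(yy, Cd), (xx, Cm)]"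
  unfolding h2_def using xx_alt mode_modL mode_modL1 ik1 by simp

lemma mismatch:
  assumes R: "\<forall>p\<in>set R. fst p \<noteq> xx \<and> fst p \<noteq> yy" "inrange L R"
    and r: "r = [(xx, Cd), (yy, Cm)] \<or> r = [(yy, Cm)] \<or> r = [(yy, Cd)] \<or> r = [(yy, Cd), (xx, Cm)]"
    and mm: "locw r xx \<noteq> locw Ow xx \<or> locw r yy \<noteq> locw Ow yy"
  shows "ip L (wop Ow) (wop (R @ r)) = 0"
proof -
  have oR: "opsat R m = []" if "m = xx \<or> m = yy" for m
    using R(1) that by (auto simp: opsat_def filter_empty_conv)
  have rr: "inrange L (R @ r)" using R(2) r xy_range by auto
  have lr: "length (opsat r m) \<le> 1" if "m = xx \<or> m = yy" for m
    using r xy_ne that by (auto simp: opsat_def)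
  have lw: "locw (R @ r) m = locw r m" "opsat (R @ r) m = opsat r m" if "m = xx \<or> m = yy" for m
    using oR[OF that] by (auto simp: locw_def)
  from mm show ?thesis
  proof
    assume "locw r xx \<noteq> locw Ow xx"
    then show ?thesis using GC[OF Ow_range rr Ow_dist, of xx] lw[of xx] lr[of xx] by simp
  next
    assume "locw r yy \<noteq> locw Ow yy"
    then show ?thesis using GC[OF Ow_range rr Ow_dist, of yy] lw[of yy] lr[of yy] by simp
  qed
qed

lemma locw_r: "locw [(xx, Cd), (yy, Cm)] xx = Cd" "locw [(xx, Cd), (yy, Cm)] yy = Cm"
  "locw [(yy, Cm)] xx = Im" "locw [(yy, Cm)] yy = Cm"
  "locw [(yy, Cd)] xx = Im" "locw [(yy, Cd)] yy = Cd"
  "locw [(yy, Cd), (xx, Cm)] xx = Cm" "locw [(yy, Cd), (xx, Cm)] yy = Cd"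
  using xy_ne by (auto simp: locw_def opsat_def)

lemma Ow_xy: "locw Ow xx = (if e = Zm then Cd else Im)" "locw Ow yy = (if e = Cd then Cd else Cm)"
  using locw_Ow[of xx] locw_Ow[of yy] xy_ne by auto

end


lemma split_at:
  assumes "locw W m = e'" "e' \<noteq> Im"
  shows "\<exists>U' V'. W = U' @ [(m, e')] @ V'"
proof -
  obtain rest where "opsat W m = e' # rest" using assms by (cases "opsat W m") (auto simp: locw_def)
  then have "e' \<in> set (opsat W m)" by simp
  then have "(m, e') \<in> set W" by (auto simp: opsat_def)
  then show ?thesis using split_list by fastforce
qed

lemma other_spin:
  fixes s0 :: spin
  obtains s1 where "s1 \<noteq> s0" "\<And>s. s \<noteq> s0 \<Longrightarrow> s = s1"
proof -
  have a: "(if s0 = Up then Dn else Up) \<noteq> s0" by (cases s0) auto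
  have b: "s = (if s0 = Up then Dn else Up)" if "s \<noteq> s0" for s using that by (cases s; cases s0) auto
  show thesis using that[OF a b] by blast
qed

lemma single_sel: "single p \<Longrightarrow> sel s0 p \<noteq> Im \<Longrightarrow> s1 \<noteq> s0 \<Longrightarrow> isodd (sel s0 p) \<and> sel s1 p = Im"
  by (cases s0; cases s1) (auto simp: single_def)

lemma both_Im: "sel s0 p = Im \<Longrightarrow> sel s1 p = Im \<Longrightarrow> s1 \<noteq> s0 \<Longrightarrow> p = (Im, Im)"
  by (cases s0; cases s1) (auto simp: prod_eq_iff)

context rset
begin

lemma last_q: "q ! (k - 1) \<noteq> (Im, Im)"
proof -
  have "q \<noteq> []" using lenq Lk by auto
  then show ?thesis using q lenq by (auto simp: supp_elems_def last_conv_nth)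
qed

lemma inj_b:
  assumes b: "l \<in> {1..k}" "es \<in> supp_elems l" and eq: "\<And>m. locw (bword L i es) m = locw (bword L i q) m"
  shows "l = k \<and> es = q"
proof -
  have len: "length es = l" using b supp_len by blast
  have lk: "l \<le> k" using b by simp
  have "l = k"
  proof (rule ccontr)
    assume "l \<noteq> k"
    then have "l < k" using lk by simp
    obtain s where s: "sel s (q ! (k - 1)) \<noteq> Im" using last_q by (metis prod.collapse sel.simps)
    have "locw (bword L i q) (mode L (i + (k - 1)) s) \<noteq> Im" using bq_at[of "k - 1" s] s Lk by simp
    then have "locw (bword L i es) (mode L (i + (k - 1)) s) \<noteq> Im" using eq by simp
    then obtain t s' where t: "t < l" "mode L (i + (k - 1)) s = mode L (i + t) s'"
      using locw_bword_nz len by metis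
    then have "(i + t) mod L = (i + (k - 1)) mod L" by (simp add: mode_eq)
    then have "t = k - 1" using site_inj[of i t L "k - 1"] t Lk \<open>l < k\<close> by linarith
    then show False using t \<open>l < k\<close> by simp
  qed
  moreover have "es = q"
  proof (rule nth_equalityI)
    show "length es = length q" using len lenq \<open>l = k\<close> by simp
    fix t assume "t < length es"
    then have t: "t < k" using len \<open>l = k\<close> by simp
    have "sel s (es ! t) = sel s (q ! t)" for s
      using locw_bword_at[of t es L i s] bq_at[of t s] eq t len \<open>l = k\<close> Lk by simp
    from this[of Up] this[of Dn] show "es ! t = q ! t" by (simp add: prod_eq_iff)
  qed
  ultimately show ?thesis by simp
qed

lemma e_cases: "e = Zm \<or> e = Cm \<or> e = Cd" using e(2) by (cases e) auto

lemma bq_x: "locw (bword L i q) xx = e"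
  using bq_at[of "k - 1" \<sigma>] e Lk by simp

lemma bq_Rtype: "Rtype i (bword L i q)"
  unfolding Rtype_def using bq_y bq_x locw_Ow e(2) by auto

lemma Gam_q: "Gam L Ur (wop Ow) (bword L i q) \<noteq> 0"
proof -
  obtain s0 where "sel s0 (q ! 0) \<noteq> Im"
  proof -
    have "q \<noteq> []" using lenq Lk by auto
    then have "q ! 0 \<noteq> (Im, Im)" using q by (auto simp: supp_elems_def hd_conv_nth)
    then show ?thesis using that by (metis prod.collapse sel.simps)
  qed
  then have s0: "locw Ow (mode L i s0) \<noteq> Im" using O3[of 0 s0] site0_ne Lk by simp
  have kk: "k \<in> {1..k}" using Lk by simp
  have iL: "i < L" using Lk by simp
  have G: "Gam L Ur (wop Ow) (bword L i q) = FF (bword L i q) ((i + k - 1) mod L) \<sigma>"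
    by (rule GR[OF kk iL q s0 bq_Rtype])
  have bq: "bword L i q = U @ [(xx, e)] @ V" using sp by simp
  note RT = rtable[OF bq bq_dist bq_range nonIm_bword bq_noty xy_ne xy_range e(2), of "wop Ow"]
  have R: "\<forall>p\<in>set (U @ V). fst p \<noteq> xx \<and> fst p \<noteq> yy" using UV_nox UV_noy by auto
  have rUV: "inrange L (U @ V)" using bq_range sp by simp
  have self: "ip L (wop Ow) (wop Ow) \<noteq> 0" by (rule ip_self_nz[OF Ow_dist Ow_range])
  have mn: "msg e V \<noteq> 0" by (rule msg_nz)
  show ?thesis
    unfolding G FF_def h1_aa h2_aa RT
  proof -
    consider "e = Zm" | "e = Cm" | "e = Cd" using e_cases by blast
    then show "-2 * ((if e = Zm then 2 * msg e V * ip L (wop Ow) (wop (U @ V @ [(xx, Cd), (yy, Cm)]))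
          else if e = Cm then msg e V * ip L (wop Ow) (wop (U @ V @ [(yy, Cm)])) else 0) +
         (if e = Zm then - 2 * msg e V * ip L (wop Ow) (wop (U @ V @ [(yy, Cd), (xx, Cm)]))
          else if e = Cd then - msg e V * ip L (wop Ow) (wop (U @ V @ [(yy, Cd)])) else 0)) \<noteq> 0"
    proof cases
      case 1
      have "ip L (wop Ow) (wop ((U @ V) @ [(yy, Cd), (xx, Cm)])) = 0"
        by (rule mismatch[OF R rUV]) (use 1 locw_r Ow_xy in auto)
      then show ?thesis using 1 self mn by (simp add: resw_def)
    next
      case 2
      then show ?thesis using self mn by (simp add: resw_def)
    next
      case 3
      then show ?thesis using self mn by (simp add: resw_def)
    qed
  qed
qed

lemma Gam_R_other:
  assumes b: "l \<in> {1..k}" "j < L" "es \<in> supp_elems l" and s0: "locw Ow (mode L i s0) \<noteq> Im"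
    and R: "Rtype j (bword L j es)" and ne: "\<not> (l = k \<and> j = i \<and> es = q)"
  shows "Gam L Ur (wop Ow) (bword L j es) = 0"
proof -
  have ji: "j = i" using R by (simp add: Rtype_def)
  let ?bw = "bword L i es"
  define e' where "e' = locw ?bw xx"
  have e'I: "e' \<noteq> Im" using R ji by (simp add: Rtype_def e'_def)
  have agr: "locw ?bw m = locw (bword L i q) m" if "m \<noteq> xx" for m
  proof (cases "m = yy")
    case True then show ?thesis using R ji bq_y by (simp add: Rtype_def)
  next
    case False then show ?thesis using R ji that locw_Ow[of m] by (simp add: Rtype_def)
  qed
  have ee: "e' \<noteq> e"
  proof
    assume "e' = e"
    then have "\<And>m. locw ?bw m = locw (bword L i q) m" using agr bq_x e'_def by metis
    then have "l = k \<and> es = q" using inj_b[OF b(1,3)] by blast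
    then show False using ne ji by simp
  qed
  have len: "length es = l" using b supp_len by blast
  have bd: "distinctw ?bw" using distinct_bword[of es L i] len b Lk by simp
  have br: "inrange L ?bw" using inrange_bword Lpos by simp
  have "locw ?bw yy = Im" using R ji by (simp add: Rtype_def)
  then have ny: "\<forall>p\<in>set ?bw. fst p \<noteq> yy" using notin_from_locw[OF _ nonIm_bword] by blast
  obtain U' V' where sp': "?bw = U' @ [(xx, e')] @ V'" using split_at[OF e'_def[symmetric] e'I] by blast
  note RT = rtable[OF sp' bd br nonIm_bword ny xy_ne xy_range e'I, of "wop Ow"]
  have R': "\<forall>p\<in>set (U' @ V'). fst p \<noteq> xx \<and> fst p \<noteq> yy"
    using distinct_other[of U' xx e' V'] bd sp' nonIm_bword[of L i es] e'I ny by auto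
  have rUV: "inrange L (U' @ V')" using br sp' by simp
  have G: "Gam L Ur (wop Ow) ?bw = FF ?bw ((i + k - 1) mod L) \<sigma>"
    using GR[OF b s0 R] ji by simp
  have c1: "cm L (wop Ow) ?bw [(xx, Cd), (yy, Cm)] = 0"
  proof -
    have "e' = Zm \<Longrightarrow> ip L (wop Ow) (wop ((U' @ V') @ [(xx, Cd), (yy, Cm)])) = 0"
      by (rule mismatch[OF R' rUV]) (use ee locw_r Ow_xy in auto)
    moreover have "e' = Cm \<Longrightarrow> ip L (wop Ow) (wop ((U' @ V') @ [(yy, Cm)])) = 0"
      by (rule mismatch[OF R' rUV]) (use ee locw_r Ow_xy e_cases in auto)
    ultimately show ?thesis unfolding RT by auto
  qed
  have c2: "cm L (wop Ow) ?bw [(yy, Cd), (xx, Cm)] = 0"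
  proof -
    have "e' = Zm \<Longrightarrow> ip L (wop Ow) (wop ((U' @ V') @ [(yy, Cd), (xx, Cm)])) = 0"
      by (rule mismatch[OF R' rUV]) (use ee locw_r Ow_xy in auto)
    moreover have "e' = Cd \<Longrightarrow> ip L (wop Ow) (wop ((U' @ V') @ [(yy, Cd)])) = 0"
      by (rule mismatch[OF R' rUV]) (use ee locw_r Ow_xy e_cases in auto)
    ultimately show ?thesis unfolding RT by auto
  qed
  show ?thesis unfolding ji G FF_def h1_aa h2_aa using c1 c2 by simp
qed

lemma q0_single:
  assumes "isodd (locw Ow (mode L i s0))" "\<forall>s. s \<noteq> s0 \<longrightarrow> locw Ow (mode L i s) = Im"
  shows "single (q ! 0)"
proof -
  have a: "locw Ow (mode L i s) = sel s (q ! 0)" for s using O3[of 0 s] site0_ne Lk by simp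
  show ?thesis using assms a[of Up] a[of Dn] by (cases s0) (auto simp: single_def)
qed

lemma Gam_L:
  assumes b: "l \<in> {1..k}" "j < L" "es \<in> supp_elems l" and s0: "locw Ow (mode L i s0) \<noteq> Im"
    and Lt: "Ltype s0 l j (bword L j es)"
    and hs: "single (q ! 0) \<Longrightarrow> (\<forall>j<L. \<forall>es\<in>supp_elems k. \<not> single (es ! 0) \<longrightarrow> c j es = 0) \<and> q ! 1 \<noteq> (Im, Im)"
  shows "c j es * Gam L Ur (wop Ow) (bword L j es) = 0"
proof -
  let ?bw = "bword L j es"
  have Ls: "isodd (locw Ow (mode L i s0))" "\<forall>s. s \<noteq> s0 \<longrightarrow> locw Ow (mode L i s) = Im"
    "j = Suc i mod L" "l = k" "locw ?bw (mode L i s0) = Im" "locw ?bw (mode L (Suc i) s0) \<noteq> Im"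
    "\<And>m. m \<noteq> mode L i s0 \<Longrightarrow> m \<noteq> mode L (Suc i) s0 \<Longrightarrow> locw ?bw m = locw Ow m"
    using Lt by (auto simp: Ltype_def)
  have sq: "single (q ! 0)" by (rule q0_single[OF Ls(1,2)])
  note H = hs[OF sq]
  have len: "length es = k" using b supp_len Ls(4) by blast
  have es0: "sel s (es ! 0) = locw ?bw (mode L (Suc i) s)" for s
  proof -
    have "locw ?bw (mode L (j + 0) s) = sel s (es ! 0)"
      using locw_bword_at[of 0 es L j s] len Lk by simp
    moreover have "mode L (j + 0) s = mode L (Suc i) s" using Ls(3) by (simp add: mode_eq)
    ultimately show ?thesis by simp
  qed
  show ?thesis
  proof (cases "single (es ! 0)")
    case False
    then have "c j es = 0" using H b Ls(4) by blast
    then show ?thesis by simp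
  next
    case True
    define g where "g = locw ?bw (mode L (Suc i) s0)"
    obtain s1 where s1: "s1 \<noteq> s0" "\<And>s. s \<noteq> s0 \<Longrightarrow> s = s1" using other_spin by blast
    have "sel s0 (es ! 0) \<noteq> Im" using es0[of s0] Ls(6) by simp
    from single_sel[OF True this s1(1)]
    have gg: "isodd g" and o1: "locw ?bw (mode L (Suc i) s1) = Im"
      using es0[of s0] es0[of s1] unfolding g_def by simp_all
    have gcd: "g = Cm \<or> g = Cd" using gg by (cases g) auto
    have "(i + 0) mod L \<noteq> (i + 1) mod L" using site_ne[of 0 1 L i] Lk by simp
    then have "mode L (Suc i) s1 \<noteq> mode L i s0" "mode L (Suc i) s1 \<noteq> mode L (Suc i) s0"
      using s1(1) by (simp_all add: mode_eq)
    then have "locw Ow (mode L (Suc i) s1) = Im" using Ls(7) o1 by simp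
    moreover have "locw Ow (mode L (i + 1) s) = sel s (q ! 1)" for s
      using O3[of 1 s] site0_ne Lk by simp
    ultimately have q1s1: "sel s1 (q ! 1) = Im" by simp
    have "sel s0 (q ! 1) \<noteq> Im"
    proof
      assume "sel s0 (q ! 1) = Im"
      then have "q ! 1 = (Im, Im)" using both_Im[OF _ q1s1 s1(1)] by simp
      then show False using H by simp
    qed
    then have Onu: "locw Ow (mode L (Suc i) s0) \<noteq> Im" using O3[of 1 s0] site0_ne Lk by simp
    have bd: "distinctw ?bw" using distinct_bword[of es L j] len Lk by simp
    have br: "inrange L ?bw" using inrange_bword Lpos by simp
    have nmu: "\<forall>p\<in>set ?bw. fst p \<noteq> mode L i s0"
      using notin_from_locw[OF Ls(5) nonIm_bword] .
    have gI: "g \<noteq> Im" using gcd by auto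
    obtain U' V' where sp': "?bw = U' @ [(mode L (Suc i) s0, g)] @ V'"
      using split_at[OF g_def[symmetric] gI] by blast
    have mn: "mode L i s0 \<noteq> mode L (Suc i) s0" using site_ne[of 0 1 L i] Lk by (simp add: mode_eq)
    have mr: "mode L i s0 < 2 * L" "mode L (Suc i) s0 < 2 * L" using mode_lt Lpos by auto
    note LT = ltable[OF sp' bd br nonIm_bword nmu mn mr gcd Ow_dist Ow_range Onu]
    have G: "Gam L Ur (wop Ow) ?bw = FF ?bw i s0" by (rule GL[OF b s0 Lt])
    have "FF ?bw i s0 = 0" using LT by (simp add: FF_def h1_def h2_def)
    then show ?thesis using G by simp
  qed
qed

end


context rset
begin

lemma REL:
  assumes cmt: "commutes L (local_sum L k c) (hubbard L Ur)"
    and hs: "single (q ! 0) \<Longrightarrow> (\<forall>j<L. \<forall>es\<in>supp_elems k. \<not> single (es ! 0) \<longrightarrow> c j es = 0) \<and> q ! 1 \<noteq> (Im, Im)"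
  shows "c i q = 0"
proof -
  obtain s0 where "sel s0 (q ! 0) \<noteq> Im"
  proof -
    have "q \<noteq> []" using lenq Lk by auto
    then have "q ! 0 \<noteq> (Im, Im)" using q by (auto simp: supp_elems_def hd_conv_nth)
    then show ?thesis using that by (metis prod.collapse sel.simps)
  qed
  then have s0: "locw Ow (mode L i s0) \<noteq> Im" using O3[of 0 s0] site0_ne Lk by simp
  define X where "X = c i q * Gam L Ur (wop Ow) (bword L i q)"
  have E: "(\<Sum>l\<in>{1..k}. \<Sum>j<L. \<Sum>es\<in>supp_elems l. c j es * Gam L Ur (wop Ow) (bword L j es)) = 0"
    by (rule expand[OF Lpos cmt])
  have T: "c j es * Gam L Ur (wop Ow) (bword L j es) = (if l = k \<and> j = i \<and> es = q then X else 0)"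
    if b: "l \<in> {1..k}" "j < L" "es \<in> supp_elems l" for l j es
  proof (cases "l = k \<and> j = i \<and> es = q")
    case True then show ?thesis by (simp add: X_def)
  next
    case ne: False
    have "c j es * Gam L Ur (wop Ow) (bword L j es) = 0"
    proof (cases "Rtype j (bword L j es)")
      case True
      then show ?thesis using Gam_R_other[OF b s0 True ne] by simp
    next
      case nR: False
      show ?thesis
      proof (cases "Ltype s0 l j (bword L j es)")
        case True
        then show ?thesis using Gam_L[OF b s0 True hs] by simp
      next
        case False
        then show ?thesis using G0[OF b s0 nR False] by simp
      qed
    qed
    moreover have "(if l = k \<and> j = i \<and> es = q then X else 0) = 0" using ne by (rule if_not_P)
    ultimately show ?thesis by simp
  qed
  have S1: "(\<Sum>es\<in>supp_elems l. if l = k \<and> j = i \<and> es = q then X else 0) = (if l = k \<and> j = i then X else 0)" for l j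
  proof (cases "l = k \<and> j = i")
    case True
    then have "(\<Sum>es\<in>supp_elems l. if l = k \<and> j = i \<and> es = q then X else 0) = (\<Sum>es\<in>supp_elems l. if es = q then X else 0)"
      by simp
    also have "\<dots> = X" using True q finite_supp[of l] by (subst sum.delta) auto
    finally show ?thesis using True by simp
  next
    case False
    then have "\<And>es. (if l = k \<and> j = i \<and> es = q then X else 0) = 0" by auto
    then have "(\<Sum>es\<in>supp_elems l. if l = k \<and> j = i \<and> es = q then X else 0) = 0" by simp
    moreover have "(if l = k \<and> j = i then X else 0) = 0" using False by (rule if_not_P)
    ultimately show ?thesis by simp
  qed
  have S2: "(\<Sum>j<L. if l = k \<and> j = i then X else 0) = (if l = k then X else 0)" for l
  proof (cases "l = k")
    case True
    then have "(\<Sum>j<L. if l = k \<and> j = i then X else 0) = (\<Sum>j<L. if j = i then X else 0)" by simp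
    also have "\<dots> = X" using Lk by (subst sum.delta) simp_all
    finally show ?thesis using True by simp
  next
    case False
    then have "\<And>j. (if l = k \<and> j = i then X else 0) = 0" by auto
    then have "(\<Sum>j<L. if l = k \<and> j = i then X else 0) = 0" by simp
    moreover have "(if l = k then X else 0) = 0" using False by (rule if_not_P)
    ultimately show ?thesis by simp
  qed
  have S3: "(\<Sum>l\<in>{1..k}. if l = k then X else 0) = X" using Lk by (subst sum.delta) simp_all
  have "(\<Sum>l\<in>{1..k}. \<Sum>j<L. \<Sum>es\<in>supp_elems l. c j es * Gam L Ur (wop Ow) (bword L j es)) = X"
  proof -
    have "(\<Sum>l\<in>{1..k}. \<Sum>j<L. \<Sum>es\<in>supp_elems l. c j es * Gam L Ur (wop Ow) (bword L j es))
        = (\<Sum>l\<in>{1..k}. \<Sum>j<L. \<Sum>es\<in>supp_elems l. if l = k \<and> j = i \<and> es = q then X else 0)"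
      by (intro sum.cong refl) (rule T, auto)
    also have "\<dots> = X" by (simp only: S1 S2 S3)
    finally show ?thesis .
  qed
  then have "X = 0" using E by simp
  then show ?thesis using Gam_q by (simp add: X_def)
qed

end

lemma rset_exists:
  assumes "2 * k + 2 \<le> L" "3 \<le> k" "i < L" "q \<in> supp_elems k"
  shows "\<exists>\<sigma> U V e. rset L k i q \<sigma> U V e"
proof -
  have lenq: "length q = k" using assms(4) by (simp add: supp_elems_def)
  have "q \<noteq> []" using lenq assms by auto
  then have "q ! (k - 1) \<noteq> (Im, Im)" using assms(4) lenq by (auto simp: supp_elems_def last_conv_nth)
  then obtain \<sigma> where s: "sel \<sigma> (q ! (k - 1)) \<noteq> Im" by (metis prod.collapse sel.simps)
  have "locw (bword L i q) (mode L (i + (k - 1)) \<sigma>) = sel \<sigma> (q ! (k - 1))"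
    using locw_bword_at[of "k - 1" q L i \<sigma>] lenq assms by simp
  then obtain U V where "bword L i q = U @ [(mode L (i + (k - 1)) \<sigma>, sel \<sigma> (q ! (k - 1)))] @ V"
    using split_at s by blast
  then have "rset L k i q \<sigma> U V (sel \<sigma> (q ! (k - 1)))"
    using assms s by (unfold_locales) auto
  then show ?thesis by blast
qed

lemma REL_global:
  assumes "2 * k + 2 \<le> L" "3 \<le> k" "i < L" "q \<in> supp_elems k"
    and cmt: "commutes L (local_sum L k c) (hubbard L Ur)"
    and hs: "single (q ! 0) \<Longrightarrow> (\<forall>j<L. \<forall>es\<in>supp_elems k. \<not> single (es ! 0) \<longrightarrow> c j es = 0) \<and> q ! 1 \<noteq> (Im, Im)"
  shows "c i q = 0"
proof -
  obtain \<sigma> U V e where "rset L k i q \<sigma> U V e" using rset_exists[OF assms(1-4)] by blast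
  then show ?thesis using rset.REL[OF _ cmt hs] by blast
qed

lemma Gfact:
  assumes "2 * k + 2 \<le> L" "3 \<le> k"
    and cmt: "commutes L (local_sum L k c) (hubbard L Ur)"
  shows "\<forall>j<L. \<forall>es\<in>supp_elems k. \<not> single (es ! 0) \<longrightarrow> c j es = 0"
  using REL_global[OF assms(1,2) _ _ cmt] by blast

theorem lemma3:
  fixes L k :: nat and U :: real and c :: "nat \<Rightarrow> (loc \<times> loc) list \<Rightarrow> complex"
  assumes "U \<noteq> 0"
    and "3 \<le> k" and "k < L div 2"
    and "k_local_conserved L U k c"
    and "i < L" and "q \<in> supp_elems k" and "q ! 1 \<noteq> (Im, Im)"
  shows "c i q = 0"
proof -
  have L: "2 * k + 2 \<le> L" using assms(3) by linarith
  have cmt: "commutes L (local_sum L k c) (hubbard L U)" using assms(4) by (simp add: k_local_conserved_def)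
  show ?thesis
    using REL_global[OF L assms(2,5,6) cmt] Gfact[OF L assms(2) cmt] assms(7) by blast
qed


end
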